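(* For any $n, k \in \mathbb{Z}_{\geq 0}$ and any two dynamic metric spaces $\gamma_X, \gamma_Y$, \[ d_H^{\mathrm{ero}}(D^n_k(\gamma_X), D^n_k(\gamma_Y)) \leq d_H(D^n_k(\gamma_X), D^n_k(\gamma_Y)) \leq 2 \cdot d_{\mathrm{dyn}}(\gamma_X, \gamma_Y). \]
   Context: A dynamic metric space (DMS) $\gamma_X=(X,d_X(\cdot))$ is a finite set $X$ with $d_X:\mathbb{R}\times X\times X\to\mathbb{R}_{\ge0}$, each $d_X(t)$ a pseudometric, each $t\mapsto d_X(t)(x,x')$ continuous. For $S\subseteq X$, $\gamma_S=(S,d_X|_S)$; $d_X(I)(x,x')=\inf_{t\in I}d_X(t)(x,x')$ for compact intervals $I$. $\mathcal{R}_\delta(d)$ is the Rips complex (simplices: finite nonempty $\sigma$ with all pairwise $d\le\delta$). $\mathbf{Dyn}$ is the poset of $(I,\delta)$ ($I$ compact interval, $\delta\ge0$) ordered by $I\subseteq I'$, $\delta\le\delta'$; $\mathcal{R}^{\mathrm{lev}}(\gamma_X)(I,\delta)=\mathcal{R}_\delta(d_X(I))$ with inclusions; $H_k$ is homology over a fixed field. $K_n(\gamma_X)=\{\gamma_S:S\subseteq X,|S|\le n\}$ and $D_k^n(\gamma_X)=\{H_k(\mathcal{R}^{\mathrm{lev}}(\gamma_S)):\gamma_S\in K_n(\gamma_X)\}$. Interleaving distance $d_I^{\mathbf{Vec}}$ on $\mathbf{Dyn}$-modules: with shift $([a,b],\delta)^\varepsilon=([a-\varepsilon,b+\varepsilon],\delta+\varepsilon)$,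 $\mathbb{V},\mathbb{W}$ are $\varepsilon$-interleaved if there are natural maps $f_p:\mathbb{V}(p)\to\mathbb{W}(p^\varepsilon)$, $g_p:\mathbb{W}(p)\to\mathbb{V}(p^\varepsilon)$ whose composites are the structure maps $p\le p^{2\varepsilon}$; $d_I^{\mathbf{Vec}}$ is the infimal such $\varepsilon$. Erosion distance on $\mathbf{Dyn}$-modules: let $\mathbb{R}^6_\times=\mathbb{R}\times\mathbb{R}^{op}\times\mathbb{R}^{op}\times\mathbb{R}^{op}\times\mathbb{R}\times\mathbb{R}$ with the product order. A point $\mathbf{a}=(a_1,\dots,a_6)$ is admissible if $a_1\le a_2$, $a_3\ge0$, $a_4\le a_5$, $a_6\ge0$, and $([a_1,a_2],a_3)\le([a_4,a_5],a_6)$ in $\mathbf{Dyn}$; a non-admissible $\mathbf{a}$ is trivially non-admissible if no admissible $\mathbf{b}<\mathbf{a}$ exists. The adapted rank invariant is $\mathrm{rk}_\mathbb{V}(\mathbf{a})=\mathrm{rank}\,\mathbb{V}(([a_1,a_2],a_3)\le([a_4,a_5],a_6))$ if $\mathbf{a}$ is admissible, $\infty$ if trivially non-admissible, $0$ otherwise. With $\mathbf{a}^{+\varepsilon}=\mathbf{a}+\varepsilon(1,-1,-1,-1,1,1)$, $d_E(\mathrm{rk}_\mathbb{V},\mathrm{rk}_\mathbb{W})=\inf\{\varepsilon>0:\forall\mathbf{a}\in\mathbb{R}^6_\times,\ \mathrm{rk}_\mathbb{V}(\mathbf{a}^{+\varepsilon})\le\mathrm{rk}_\mathbb{W}(\mathbf{a}),\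 \mathrm{rk}_\mathbb{W}(\mathbf{a}^{+\varepsilon})\le\mathrm{rk}_\mathbb{V}(\mathbf{a})\}$. For a metric $\rho$ on modules, the induced Hausdorff distance on sets is $\max\{\sup_{\mathbb{V}\in P}\inf_{\mathbb{W}\in Q}\rho,\sup_{\mathbb{W}\in Q}\inf_{\mathbb{V}\in P}\rho\}$; $d_H$ uses $\rho=d_I^{\mathbf{Vec}}$ and $d_H^{\mathrm{ero}}$ uses $\rho(\mathbb{V},\mathbb{W})=d_E(\mathrm{rk}_\mathbb{V},\mathrm{rk}_\mathbb{W})$. The distance $d_{\mathrm{dyn}}$: a tripod is a set $Z$ with surjections $\varphi_X:Z\to X$, $\varphi_Y:Z\to Y$; it is a $(2,\varepsilon)$-tripod if for all $t\in\mathbb{R}$, $z,z'\in Z$: $\min_{t'\in[t-\varepsilon,t+\varepsilon]}d_X(t')(\varphi_Xz,\varphi_Xz')\le d_Y(t)(\varphi_Yz,\varphi_Yz')+2\varepsilon$ and symmetrically with $X,Y$ swapped; $d_{\mathrm{dyn}}$ is the infimum over tripods of the infimal such $\varepsilon>0$. *)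

theory Defs
  imports Complex_Main "HOL-Library.Extended_Real"
begin

definition dms :: "'a set \<Rightarrow> (real \<Rightarrow> 'a \<Rightarrow> 'a \<Rightarrow> real) \<Rightarrow> bool" where
  "dms X d \<longleftrightarrow> finite X \<and>
     (\<forall>t. \<forall>x\<in>X. \<forall>y\<in>X. 0 \<le> d t x y \<and> d t x x = 0 \<and> d t x y = d t y x \<and>
            (\<forall>z\<in>X. d t x z \<le> d t x y + d t y z)) \<and>
     (\<forall>x\<in>X. \<forall>y\<in>X. continuous_on UNIV (\<lambda>t. d t x y))"

definition int_dist :: "(real \<Rightarrow> 'a \<Rightarrow> 'a \<Rightarrow> real) \<Rightarrow> real \<Rightarrow> real \<Rightarrow> 'a \<Rightarrow> 'a \<Rightarrow> real" where
  "int_dist d a b x y = Inf ((\<lambda>t. d t x y) ` {a..b})"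

definition rips :: "('a \<Rightarrow> 'a \<Rightarrow> real) \<Rightarrow> 'a set \<Rightarrow> real \<Rightarrow> 'a set set" where
  "rips d S \<delta> = {\<sigma>. \<sigma> \<subseteq> S \<and> finite \<sigma> \<and> \<sigma> \<noteq> {} \<and> (\<forall>x\<in>\<sigma>. \<forall>y\<in>\<sigma>. d x y \<le> \<delta>)}"

text \<open>Points of Dyn: (a,b,delta) stands for ([a,b],delta).\<close>
type_synonym dynp = "real \<times> real \<times> real"

definition valid_dp :: "dynp \<Rightarrow> bool" where
  "valid_dp p = (case p of (a,b,\<delta>) \<Rightarrow> a \<le> b \<and> 0 \<le> \<delta>)"

definition dp_le :: "dynp \<Rightarrow> dynp \<Rightarrow> bool" where
  "dp_le p q = (case p of (a,b,\<delta>) \<Rightarrow> case q of (a',b',\<delta>') \<Rightarrow> a' \<le> a \<and> b \<le> b' \<and> \<delta> \<le> \<delta>')"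

definition dp_shift :: "real \<Rightarrow> dynp \<Rightarrow> dynp" where
  "dp_shift \<epsilon> p = (case p of (a,b,\<delta>) \<Rightarrow> (a - \<epsilon>, b + \<epsilon>, \<delta> + \<epsilon>))"

definition rips_lev :: "(real \<Rightarrow> 'a \<Rightarrow> 'a \<Rightarrow> real) \<Rightarrow> 'a set \<Rightarrow> dynp \<Rightarrow> 'a set set" where
  "rips_lev d S p = (case p of (a,b,\<delta>) \<Rightarrow> rips (int_dist d a b) S \<delta>)"

section \<open>Simplicial homology over a field (ordered simplices via the linear order)\<close>

definition oriented_simplices :: "nat \<Rightarrow> ('a::linorder) set set \<Rightarrow> 'a list set" where
  "oriented_simplices k K = {\<sigma>. sorted_wrt (<) \<sigma> \<and> length \<sigma> = Suc k \<and> set \<sigma> \<in> K}"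

definition chains :: "nat \<Rightarrow> ('a::linorder) set set \<Rightarrow> ('a list \<Rightarrow> 'f::field) set" where
  "chains k K = {c. \<forall>\<sigma>. c \<sigma> \<noteq> 0 \<longrightarrow> \<sigma> \<in> oriented_simplices k K}"

definition del_nth :: "nat \<Rightarrow> 'a list \<Rightarrow> 'a list" where
  "del_nth i xs = take i xs @ drop (Suc i) xs"

text \<open>Boundary operator (non-augmented: nothing is mapped to the empty simplex).\<close>
definition bd :: "('a list \<Rightarrow> 'f::field) \<Rightarrow> ('a list \<Rightarrow> 'f)" where
  "bd c = (\<lambda>\<tau>. if \<tau> = [] then 0 else
      (\<Sum>\<sigma>\<in>{\<sigma>. c \<sigma> \<noteq> 0}. c \<sigma> * (\<Sum>i<length \<sigma>. if del_nth i \<sigma> = \<tau> then (-1)^i else 0)))"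

definition cycles :: "nat \<Rightarrow> ('a::linorder) set set \<Rightarrow> ('a list \<Rightarrow> 'f::field) set" where
  "cycles k K = {c \<in> chains k K. bd c = (\<lambda>_. 0)}"

definition boundaries :: "nat \<Rightarrow> ('a::linorder) set set \<Rightarrow> ('a list \<Rightarrow> 'f::field) set" where
  "boundaries k K = bd ` chains (Suc k) K"

definition homology :: "nat \<Rightarrow> ('a::linorder) set set \<Rightarrow> ('a list \<Rightarrow> 'f::field) set set" where
  "homology k K = {(\<lambda>b. \<lambda>\<sigma>. z \<sigma> + b \<sigma>) ` boundaries k K | z. z \<in> cycles k K}"

definition csum :: "('x \<Rightarrow> 'f::field) set \<Rightarrow> ('x \<Rightarrow> 'f) set \<Rightarrow> ('x \<Rightarrow> 'f) set" where
  "csum A A' = {(\<lambda>x. a x + a' x) | a a'. a \<in> A \<and> a' \<in> A'}"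

definition cscale :: "'f::field \<Rightarrow> ('x \<Rightarrow> 'f) set \<Rightarrow> ('x \<Rightarrow> 'f) set" where
  "cscale c A = (\<lambda>a x. c * a x) ` A"

text \<open>A module: carrier vector spaces V(p) and structure maps V(p \<le> q).\<close>
type_synonym ('x,'f) dmod =
  "(dynp \<Rightarrow> ('x \<Rightarrow> 'f) set set) \<times> (dynp \<Rightarrow> dynp \<Rightarrow> ('x \<Rightarrow> 'f) set \<Rightarrow> ('x \<Rightarrow> 'f) set)"

text \<open>H_k(R^lev(gamma_S)); structure maps induced by inclusion: [z] in B_p-class goes to [z] in B_q-class.\<close>
definition hom_module :: "nat \<Rightarrow> (real \<Rightarrow> 'a \<Rightarrow> 'a \<Rightarrow> real) \<Rightarrow> ('a::linorder) set \<Rightarrow> ('a list, 'f::field) dmod" where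
  "hom_module k d S =
     (\<lambda>p. homology k (rips_lev d S p),
      \<lambda>p q A. csum A (boundaries k (rips_lev d S q)))"

definition dgm_set :: "nat \<Rightarrow> nat \<Rightarrow> ('a::linorder) set \<Rightarrow> (real \<Rightarrow> 'a \<Rightarrow> 'a \<Rightarrow> real) \<Rightarrow> ('a list, 'f::field) dmod set" where
  "dgm_set k n X d = {hom_module k d S | S. S \<subseteq> X \<and> card S \<le> n}"

definition lin_map :: "(('x \<Rightarrow> 'f::field) set \<Rightarrow> ('y \<Rightarrow> 'f) set) \<Rightarrow> ('x \<Rightarrow> 'f) set set \<Rightarrow> ('y \<Rightarrow> 'f) set set \<Rightarrow> bool" where
  "lin_map f C D \<longleftrightarrow> (\<forall>A\<in>C. f A \<in> D) \<and>
     (\<forall>A\<in>C. \<forall>A'\<in>C. f (csum A A') = csum (f A) (f A')) \<and>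
     (\<forall>c. c \<noteq> 0 \<longrightarrow> (\<forall>A\<in>C. f (cscale c A) = cscale c (f A)))"

definition shifted_morph :: "real \<Rightarrow> (dynp \<Rightarrow> ('x \<Rightarrow> 'f::field) set \<Rightarrow> ('y \<Rightarrow> 'f) set) \<Rightarrow> ('x,'f) dmod \<Rightarrow> ('y,'f) dmod \<Rightarrow> bool" where
  "shifted_morph \<epsilon> f V W \<longleftrightarrow>
     (\<forall>p. valid_dp p \<longrightarrow> lin_map (f p) (fst V p) (fst W (dp_shift \<epsilon> p))) \<and>
     (\<forall>p q. valid_dp p \<and> valid_dp q \<and> dp_le p q \<longrightarrow>
        (\<forall>A\<in>fst V p. f q (snd V p q A) = snd W (dp_shift \<epsilon> p) (dp_shift \<epsilon> q) (f p A)))"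

definition interleaved :: "real \<Rightarrow> ('x,'f::field) dmod \<Rightarrow> ('y,'f) dmod \<Rightarrow> bool" where
  "interleaved \<epsilon> V W \<longleftrightarrow> (\<exists>f g. shifted_morph \<epsilon> f V W \<and> shifted_morph \<epsilon> g W V \<and>
     (\<forall>p. valid_dp p \<longrightarrow> (\<forall>A\<in>fst V p. g (dp_shift \<epsilon> p) (f p A) = snd V p (dp_shift (2*\<epsilon>) p) A)) \<and>
     (\<forall>p. valid_dp p \<longrightarrow> (\<forall>A\<in>fst W p. f (dp_shift \<epsilon> p) (g p A) = snd W p (dp_shift (2*\<epsilon>) p) A)))"

definition interleaving_dist :: "('x,'f::field) dmod \<Rightarrow> ('y,'f) dmod \<Rightarrow> ereal" where
  "interleaving_dist V W = Inf {ereal \<epsilon> | \<epsilon>. 0 \<le> \<epsilon> \<and> interleaved \<epsilon> V W}"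

text \<open>Linear independence of a list of cosets in the quotient space C (zero = the class containing 0).\<close>
definition cls_indep :: "('x \<Rightarrow> 'f::field) set set \<Rightarrow> ('x \<Rightarrow> 'f) set list \<Rightarrow> bool" where
  "cls_indep C As \<longleftrightarrow> (\<forall>(c::nat \<Rightarrow> 'f) zs.
     length zs = length As \<and> (\<forall>i<length As. zs ! i \<in> As ! i) \<and>
     (\<exists>A0\<in>C. (\<lambda>_. 0) \<in> A0 \<and> (\<lambda>x. \<Sum>i<length As. c i * (zs ! i) x) \<in> A0)
     \<longrightarrow> (\<forall>i<length As. c i = 0))"

definition rank_map :: "('x,'f::field) dmod \<Rightarrow> dynp \<Rightarrow> dynp \<Rightarrow> enat" where
  "rank_map V p q = Sup {enat n | n. \<exists>As. length As = n \<and> set As \<subseteq> snd V p q ` fst V p \<and> cls_indep (fst V q) As}"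

type_synonym r6 = "real \<times> real \<times> real \<times> real \<times> real \<times> real"

definition admissible :: "r6 \<Rightarrow> bool" where
  "admissible a = (case a of (a1,a2,a3,a4,a5,a6) \<Rightarrow>
     a1 \<le> a2 \<and> 0 \<le> a3 \<and> a4 \<le> a5 \<and> 0 \<le> a6 \<and> dp_le (a1,a2,a3) (a4,a5,a6))"

definition le6 :: "r6 \<Rightarrow> r6 \<Rightarrow> bool" where
  "le6 b a = (case b of (b1,b2,b3,b4,b5,b6) \<Rightarrow> case a of (a1,a2,a3,a4,a5,a6) \<Rightarrow>
     b1 \<le> a1 \<and> a2 \<le> b2 \<and> a3 \<le> b3 \<and> a4 \<le> b4 \<and> b5 \<le> a5 \<and> b6 \<le> a6)"

definition triv_nonadmissible :: "r6 \<Rightarrow> bool" where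
  "triv_nonadmissible a \<longleftrightarrow> \<not> admissible a \<and> \<not> (\<exists>b. admissible b \<and> le6 b a \<and> b \<noteq> a)"

definition adapted_rank :: "('x,'f::field) dmod \<Rightarrow> r6 \<Rightarrow> enat" where
  "adapted_rank V a = (case a of (a1,a2,a3,a4,a5,a6) \<Rightarrow>
     if admissible a then rank_map V (a1,a2,a3) (a4,a5,a6)
     else if triv_nonadmissible a then \<infinity> else 0)"

definition r6_shift :: "real \<Rightarrow> r6 \<Rightarrow> r6" where
  "r6_shift \<epsilon> a = (case a of (a1,a2,a3,a4,a5,a6) \<Rightarrow>
     (a1 + \<epsilon>, a2 - \<epsilon>, a3 - \<epsilon>, a4 - \<epsilon>, a5 + \<epsilon>, a6 + \<epsilon>))"

definition erosion_dist :: "('x,'f::field) dmod \<Rightarrow> ('y,'f) dmod \<Rightarrow> ereal" where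
  "erosion_dist V W = Inf {ereal \<epsilon> | \<epsilon>. 0 < \<epsilon> \<and>
     (\<forall>a. adapted_rank V (r6_shift \<epsilon> a) \<le> adapted_rank W a \<and>
          adapted_rank W (r6_shift \<epsilon> a) \<le> adapted_rank V a)}"

definition hausdorff :: "('v \<Rightarrow> 'w \<Rightarrow> ereal) \<Rightarrow> 'v set \<Rightarrow> 'w set \<Rightarrow> ereal" where
  "hausdorff \<rho> P Q = max (SUP V\<in>P. INF W\<in>Q. \<rho> V W) (SUP W\<in>Q. INF V\<in>P. \<rho> V W)"

definition tripod :: "'c set \<Rightarrow> ('c \<Rightarrow> 'a) \<Rightarrow> ('c \<Rightarrow> 'b) \<Rightarrow> 'a set \<Rightarrow> 'b set \<Rightarrow> bool" where
  "tripod Z \<phi>X \<phi>Y X Y \<longleftrightarrow> \<phi>X ` Z = X \<and> \<phi>Y ` Z = Y"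

definition tripod_2eps :: "real \<Rightarrow> (real \<Rightarrow> 'a \<Rightarrow> 'a \<Rightarrow> real) \<Rightarrow> (real \<Rightarrow> 'b \<Rightarrow> 'b \<Rightarrow> real) \<Rightarrow> 'c set \<Rightarrow> ('c \<Rightarrow> 'a) \<Rightarrow> ('c \<Rightarrow> 'b) \<Rightarrow> bool" where
  "tripod_2eps \<epsilon> dX dY Z \<phi>X \<phi>Y \<longleftrightarrow> (\<forall>t. \<forall>z\<in>Z. \<forall>z'\<in>Z.
     Inf ((\<lambda>t'. dX t' (\<phi>X z) (\<phi>X z')) ` {t - \<epsilon>..t + \<epsilon>}) \<le> dY t (\<phi>Y z) (\<phi>Y z') + 2 * \<epsilon> \<and>
     Inf ((\<lambda>t'. dY t' (\<phi>Y z) (\<phi>Y z')) ` {t - \<epsilon>..t + \<epsilon>}) \<le> dX t (\<phi>X z) (\<phi>X z') + 2 * \<epsilon>)"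

text \<open>Tripods are taken with Z of type 'a * 'b; every tripod's image in X x Y is such a
  tripod satisfying the same inequalities, so this gives the same infimum.\<close>
definition d_dyn :: "'a set \<Rightarrow> (real \<Rightarrow> 'a \<Rightarrow> 'a \<Rightarrow> real) \<Rightarrow> 'b set \<Rightarrow> (real \<Rightarrow> 'b \<Rightarrow> 'b \<Rightarrow> real) \<Rightarrow> ereal" where
  "d_dyn X dX Y dY = Inf {ereal \<epsilon> | \<epsilon>. 0 < \<epsilon> \<and>
     (\<exists>(Z::('a \<times> 'b) set) \<phi>X \<phi>Y. tripod Z \<phi>X \<phi>Y X Y \<and> tripod_2eps \<epsilon> dX dY Z \<phi>X \<phi>Y)}"

end

theory Submission
  imports Defs "HOL-Library.Multiset"
begin

fun ninv :: "'a::linorder list \<Rightarrow> nat" where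
  "ninv [] = 0"
| "ninv (x#xs) = length (filter (\<lambda>y. y < x) xs) + ninv xs"

definition sw :: "nat \<Rightarrow> 'a list \<Rightarrow> 'a list" where
  "sw j l = l[j := l!Suc j, Suc j := l!j]"

definition sgnop :: "nat \<Rightarrow> 'm::ab_group_add \<Rightarrow> 'm" where
  "sgnop n x = (if even n then x else - x)"

definition adj_alt :: "('a list \<Rightarrow> 'm::ab_group_add) \<Rightarrow> bool" where
  "adj_alt F \<longleftrightarrow> (\<forall>l j. Suc j < length l \<longrightarrow> F (sw j l) = - F l)"

definition vanish :: "('a list \<Rightarrow> 'm::ab_group_add) \<Rightarrow> bool" where
  "vanish F \<longleftrightarrow> (\<forall>l j. Suc j < length l \<and> l!j = l!Suc j \<longrightarrow> F l = 0)"

lemma length_sw[simp]: "length (sw j l) = length l"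
  by (simp add: sw_def)

lemma mset_sw: "Suc j < length l \<Longrightarrow> mset (sw j l) = mset l"
  unfolding sw_def using mset_swap[of "Suc j" l j] by simp

lemma set_sw: "Suc j < length l \<Longrightarrow> set (sw j l) = set l"
  by (metis mset_sw set_mset_mset)

lemma distinct_sw: "Suc j < length l \<Longrightarrow> distinct (sw j l) = distinct l"
  by (metis mset_sw distinct_count_atmost_1 count_mset set_mset_mset)

lemma sort_sw: "Suc j < length l \<Longrightarrow> sort (sw j l) = sort l"
  by (metis mset_sw properties_for_sort mset_sort sorted_sort)

lemma length_filter_mset_eq: "mset xs = mset ys \<Longrightarrow> length (filter P xs) = length (filter P ys)"
  by (metis mset_filter size_mset)

lemma sw_Cons_Suc: "sw (Suc j) (x#xs) = x # sw j xs"
  by (simp add: sw_def)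

lemma sw_0: "sw 0 (a#b#xs) = b#a#xs"
  by (simp add: sw_def)

lemma ninv_sw_lt: "Suc j < length l \<Longrightarrow> l!j < l!Suc j \<Longrightarrow> ninv (sw j l) = Suc (ninv l)"
proof (induction l arbitrary: j)
  case Nil then show ?case by simp
next
  case (Cons x xs)
  show ?case
  proof (cases j)
    case 0
    with Cons obtain b ys where xs: "xs = b#ys" by (cases xs) auto
    with Cons 0 show ?thesis by (auto simp: sw_0)
  next
    case (Suc j')
    with Cons have "Suc j' < length xs" by simp
    with Cons Suc show ?thesis
      by (simp add: sw_Cons_Suc length_filter_mset_eq[OF mset_sw])
  qed
qed

lemma ninv_sw_gt: "Suc j < length l \<Longrightarrow> l!Suc j < l!j \<Longrightarrow> ninv l = Suc (ninv (sw j l))"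
proof (induction l arbitrary: j)
  case Nil then show ?case by simp
next
  case (Cons x xs)
  show ?case
  proof (cases j)
    case 0
    with Cons obtain b ys where xs: "xs = b#ys" by (cases xs) auto
    with Cons 0 show ?thesis by (auto simp: sw_0)
  next
    case (Suc j')
    with Cons have "Suc j' < length xs" by simp
    with Cons Suc show ?thesis
      by (simp add: sw_Cons_Suc length_filter_mset_eq[OF mset_sw])
  qed
qed

lemma sw_sw: "Suc j < length l \<Longrightarrow> sw j (sw j l) = l"
  unfolding sw_def by (simp add: list_update_swap list_eq_iff_nth_eq nth_list_update)

lemma sgnop_Suc: "sgnop (Suc n) x = - sgnop n x"
  by (simp add: sgnop_def)

lemma sgnop_0[simp]: "sgnop 0 x = x"
  by (simp add: sgnop_def)

lemma sgnop_zero[simp]: "sgnop n 0 = 0"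
  by (simp add: sgnop_def)

lemma sgnop_minus: "sgnop n (- x) = - sgnop n x"
  by (simp add: sgnop_def)

lemma sgnop_add: "sgnop n (x + y) = sgnop n x + sgnop n y"
  by (simp add: sgnop_def)

lemma alt_nondistinct_aux:
  assumes A: "adj_alt F" and V: "vanish F"
  shows "p < q \<Longrightarrow> q < length l \<Longrightarrow> l!p = l!q \<Longrightarrow> F l = 0"
proof (induction "q - p" arbitrary: q l)
  case 0 then show ?case by simp
next
  case (Suc d)
  show ?case
  proof (cases "q = Suc p")
    case True
    with Suc.prems V show ?thesis unfolding vanish_def by auto
  next
    case False
    then have pq: "p < q - 1" "Suc (q - 1) = q" using Suc.prems by auto
    let ?l = "sw (q - 1) l"
    have "Suc (q-1) < length l" using pq Suc.prems by simp
    then have eq: "F ?l = - F l" using A unfolding adj_alt_def by blast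
    have "?l ! p = l ! p" "?l ! (q-1) = l ! q"
      using pq Suc.prems by (auto simp: sw_def nth_list_update)
    then have "F ?l = 0"
      using Suc.hyps(1)[of "q-1" ?l] Suc.prems pq Suc.hyps(2) by auto
    with eq show ?thesis by simp
  qed
qed

lemma alt_nondistinct:
  assumes "adj_alt F" "vanish F" "\<not> distinct l"
  shows "F l = 0"
proof -
  from assms(3) obtain p q where "p < length l" "q < length l" "p \<noteq> q" "l!p = l!q"
    by (auto simp: distinct_conv_nth)
  then show ?thesis
    using alt_nondistinct_aux[OF assms(1,2), of p q l] alt_nondistinct_aux[OF assms(1,2), of q p l]
    by (cases "p < q") auto
qed

lemma not_sorted_descent:
  fixes l :: "'a::linorder list"
  assumes "distinct l" "\<not> sorted_wrt (<) l"
  shows "\<exists>j. Suc j < length l \<and> l!Suc j < l!j"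
proof (rule ccontr)
  assume "\<not> ?thesis"
  then have "\<forall>j. Suc j < length l \<longrightarrow> l!j \<le> l!Suc j" by (meson not_less)
  then have "sorted l" by (simp add: sorted_iff_nth_Suc)
  with assms show False by (simp add: strict_sorted_iff)
qed

lemma sorted_ninv0: "sorted_wrt (<) l \<Longrightarrow> ninv l = 0"
  by (induction l) (auto simp: filter_empty_conv)

lemma alt_sort:
  fixes F :: "'a::linorder list \<Rightarrow> 'm::ab_group_add"
  assumes A: "adj_alt F" and V: "vanish F"
  shows "F l = (if distinct l then sgnop (ninv l) (F (sort l)) else 0)"
proof (induction "ninv l" arbitrary: l rule: less_induct)
  case less
  show ?case
  proof (cases "distinct l")
    case False then show ?thesis using alt_nondistinct[OF A V] by simp
  next
    case True
    show ?thesis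
    proof (cases "sorted_wrt (<) l")
      case True
      then show ?thesis by (simp add: sorted_ninv0 strict_sorted_iff sorted_sort_id)
    next
      case False
      with \<open>distinct l\<close> obtain j where j: "Suc j < length l" "l!Suc j < l!j"
        using not_sorted_descent by blast
      have n: "ninv l = Suc (ninv (sw j l))" using ninv_sw_gt[OF j] .
      have d: "distinct (sw j l)" using distinct_sw[OF j(1)] True by simp
      have "F (sw j l) = sgnop (ninv (sw j l)) (F (sort (sw j l)))"
        using less[of "sw j l"] n d by simp
      moreover have "F (sw j l) = - F l" using A j unfolding adj_alt_def by blast
      then have "F l = - F (sw j l)" by simp
      ultimately show ?thesis using n True sort_sw[OF j(1)]
        by (simp add: sgnop_Suc)
    qed
  qed
qed

lemma length_del_nth[simp]: "i < length l \<Longrightarrow> length (del_nth i l) = length l - 1"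
  by (simp add: del_nth_def)

lemma nth_del_nth: "i < length l \<Longrightarrow> p < length l - 1 \<Longrightarrow>
   del_nth i l ! p = (if p < i then l!p else l!Suc p)"
  by (simp add: del_nth_def nth_append min_def)

lemma del_nth_sw: "Suc i < length m \<Longrightarrow> del_nth i (sw i m) = del_nth (Suc i) m"
  by (rule nth_equalityI) (auto simp: nth_del_nth sw_def nth_list_update less_Suc_eq)

lemma alt_move_front:
  assumes A: "adj_alt F"
  shows "i < length m \<Longrightarrow> F (m!i # del_nth i m) = sgnop i (F m)"
proof (induction i arbitrary: m)
  case 0
  then show ?case by (cases m) (auto simp: del_nth_def)
next
  case (Suc i)
  let ?m = "sw i m"
  have "?m ! i = m ! Suc i" using Suc.prems by (simp add: sw_def nth_list_update)
  moreover have "del_nth i ?m = del_nth (Suc i) m" by (rule del_nth_sw[OF Suc.prems])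
  ultimately have "F (m!Suc i # del_nth (Suc i) m) = sgnop i (F ?m)"
    using Suc.IH[of ?m] Suc.prems by simp
  also have "F ?m = - F m" using A Suc.prems unfolding adj_alt_def by auto
  finally show ?case by (simp add: sgnop_Suc sgnop_minus)
qed

definition supp :: "('x \<Rightarrow> 'f::zero) \<Rightarrow> 'x set" where
  "supp F = {x. F x \<noteq> 0}"

definition lin :: "('x \<Rightarrow> 'y \<Rightarrow> 'f::field) \<Rightarrow> ('x \<Rightarrow> 'f) \<Rightarrow> 'y \<Rightarrow> 'f" where
  "lin T F = (\<lambda>y. \<Sum>x\<in>supp F. F x * T x y)"

definition dl :: "'x \<Rightarrow> 'x \<Rightarrow> 'f::zero_neq_one" where
  "dl x = (\<lambda>y. if y = x then 1 else 0)"

abbreviation fin :: "('x \<Rightarrow> 'f::zero) \<Rightarrow> bool" where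
  "fin F \<equiv> finite (supp F)"

lemma supp_iff[simp]: "x \<in> supp F \<longleftrightarrow> F x \<noteq> 0"
  by (simp add: supp_def)

lemma lin_sup:
  assumes "finite L" "supp F \<subseteq> L"
  shows "lin T F y = (\<Sum>x\<in>L. F x * T x y)"
  unfolding lin_def using assms
  by (intro sum.mono_neutral_left) auto

lemma supp_lin: "supp (lin T F) \<subseteq> (\<Union>x\<in>supp F. supp (T x))"
proof
  fix y assume "y \<in> supp (lin T F)"
  then have "(\<Sum>x\<in>supp F. F x * T x y) \<noteq> 0" by (simp add: lin_def)
  then obtain x where "x \<in> supp F" "F x * T x y \<noteq> 0"
    by (meson sum.neutral)
  then have "x \<in> supp F" "y \<in> supp (T x)" by auto
  then show "y \<in> (\<Union>x\<in>supp F. supp (T x))" by blast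
qed

lemma fin_lin:
  assumes "fin F" "\<And>x. x \<in> supp F \<Longrightarrow> fin (T x)"
  shows "fin (lin T F)"
  using supp_lin[of T F] assms by (meson finite_UN_I finite_subset)

lemma supp_add': fixes F G :: "'x \<Rightarrow> 'g::monoid_add" shows "supp (\<lambda>x. F x + G x) \<subseteq> supp F \<union> supp G"
  by (auto simp: supp_def)

lemma lin_add:
  assumes "fin F" "fin G"
  shows "lin T (\<lambda>x. F x + G x) = (\<lambda>y. lin T F y + lin T G y)"
proof
  fix y
  let ?L = "supp F \<union> supp G"
  have "lin T (\<lambda>x. F x + G x) y = (\<Sum>x\<in>?L. (F x + G x) * T x y)"
    by (rule lin_sup) (use assms in auto)
  also have "\<dots> = (\<Sum>x\<in>?L. F x * T x y) + (\<Sum>x\<in>?L. G x * T x y)"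
    by (simp add: distrib_right sum.distrib)
  also have "\<dots> = lin T F y + lin T G y"
    using assms lin_sup[of ?L F T y] lin_sup[of ?L G T y] by simp
  finally show "lin T (\<lambda>x. F x + G x) y = lin T F y + lin T G y" .
qed

lemma lin_smult: "lin T (\<lambda>x. c * F x) = (\<lambda>y. c * lin T F y)"
proof
  fix y
  show "lin T (\<lambda>x. c * F x) y = c * lin T F y"
  proof (cases "c = 0")
    case True then show ?thesis by (simp add: lin_def supp_def)
  next
    case False
    then have "supp (\<lambda>x. c * F x) = supp F" by (auto simp: supp_def)
    then show ?thesis by (simp add: lin_def sum_distrib_left mult.assoc)
  qed
qed

lemma lin_uminus: "lin T (\<lambda>x. - F x) = (\<lambda>y. - lin T F y)"
  using lin_smult[of T "-1" F] by simp

lemma lin_minus: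
  assumes "fin F" "fin G"
  shows "lin T (\<lambda>x. F x - G x) = (\<lambda>y. lin T F y - lin T G y)"
proof -
  have "lin T (\<lambda>x. F x + (-1) * G x) = (\<lambda>y. lin T F y + lin T (\<lambda>x. (-1) * G x) y)"
    by (rule lin_add) (use assms in \<open>auto simp: supp_def\<close>)
  then show ?thesis by (simp add: lin_uminus)
qed

lemma lin_zero[simp]: "lin T (\<lambda>x. 0) = (\<lambda>y. 0)"
  by (simp add: lin_def supp_def)

lemma supp_dl[simp]: "supp (dl x :: _ \<Rightarrow> 'f::zero_neq_one) = {x}"
  by (auto simp: supp_def dl_def)

lemma lin_dl[simp]: "lin T (dl x) = T x"
  apply (rule ext)
  apply (simp add: lin_def)
  apply (simp add: dl_def)
  done

lemma lin_id:
  assumes "fin F" shows "lin dl F = F"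
proof
  fix y
  show "lin dl F y = F y"
  proof (cases "F y = 0")
    case True
    then show ?thesis by (auto simp: lin_def dl_def intro!: sum.neutral)
  next
    case False
    then have "lin dl F y = (\<Sum>x\<in>{y}. F x * dl x y)"
      unfolding lin_def using assms
      by (intro sum.mono_neutral_right) (auto simp: dl_def)
    then show ?thesis by (simp add: dl_def)
  qed
qed

lemma lin_cong:
  assumes "\<And>x. x \<in> supp F \<Longrightarrow> T x = T' x"
  shows "lin T F = lin T' F"
  using assms by (simp add: lin_def)

lemma lin_T_add:
  "lin (\<lambda>x y. T1 x y + T2 x y) F = (\<lambda>y. lin T1 F y + lin T2 F y)"
  by (simp add: lin_def distrib_left sum.distrib)

lemma lin_T_minus:
  "lin (\<lambda>x y. T1 x y - T2 x y) F = (\<lambda>y. lin T1 F y - lin T2 F y)"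
  by (simp add: lin_def right_diff_distrib sum_subtractf)

lemma lin_T_zero: "lin (\<lambda>x y. 0) F = (\<lambda>y. 0)"
  by (simp add: lin_def)

lemma lin_comp:
  assumes "fin F" "\<And>x. x \<in> supp F \<Longrightarrow> fin (T1 x)"
  shows "lin T2 (lin T1 F) = lin (\<lambda>x. lin T2 (T1 x)) F"
proof
  fix z
  let ?M = "\<Union>x\<in>supp F. supp (T1 x)"
  have fM: "finite ?M" using assms by auto
  have "lin T2 (lin T1 F) z = (\<Sum>m\<in>?M. lin T1 F m * T2 m z)"
    by (rule lin_sup[OF fM supp_lin])
  also have "\<dots> = (\<Sum>m\<in>?M. \<Sum>x\<in>supp F. F x * T1 x m * T2 m z)"
    by (simp add: lin_def sum_distrib_right)
  also have "\<dots> = (\<Sum>x\<in>supp F. \<Sum>m\<in>?M. F x * T1 x m * T2 m z)"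
    by (rule sum.swap)
  also have "\<dots> = (\<Sum>x\<in>supp F. F x * lin T2 (T1 x) z)"
  proof (rule sum.cong[OF refl])
    fix x assume x: "x \<in> supp F"
    have "lin T2 (T1 x) z = (\<Sum>m\<in>?M. T1 x m * T2 m z)"
      by (rule lin_sup[OF fM]) (use x in auto)
    then show "(\<Sum>m\<in>?M. F x * T1 x m * T2 m z) = F x * lin T2 (T1 x) z"
      by (simp add: sum_distrib_left mult.assoc)
  qed
  also have "\<dots> = lin (\<lambda>x. lin T2 (T1 x)) F z"
    by (simp add: lin_def)
  finally show "lin T2 (lin T1 F) z = lin (\<lambda>x. lin T2 (T1 x)) F z" .
qed

lemma fin_sum_fun:
  assumes "finite I" "\<And>i. i \<in> I \<Longrightarrow> fin (G i)"
  shows "fin (\<lambda>y. \<Sum>i\<in>I. G i y)"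
proof -
  have "supp (\<lambda>y. \<Sum>i\<in>I. G i y) \<subseteq> (\<Union>i\<in>I. supp (G i))"
  proof
    fix y assume "y \<in> supp (\<lambda>y. \<Sum>i\<in>I. G i y)"
    then have "(\<Sum>i\<in>I. G i y) \<noteq> 0" by simp
    then obtain i where "i \<in> I" "G i y \<noteq> 0" by (meson sum.neutral)
    then show "y \<in> (\<Union>i\<in>I. supp (G i))" by auto
  qed
  then show ?thesis using assms by (meson finite_UN_I finite_subset)
qed

lemma lin_sum_fun:
  assumes "finite I" "\<And>i. i \<in> I \<Longrightarrow> fin (G i)"
  shows "lin T (\<lambda>y. \<Sum>i\<in>I. G i y) = (\<lambda>z. \<Sum>i\<in>I. lin T (G i) z)"
  using assms
proof (induction I rule: finite_induct)
  case empty then show ?case by simp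
next
  case (insert i I)
  have "lin T (\<lambda>y. \<Sum>j\<in>insert i I. G j y) = lin T (\<lambda>y. G i y + (\<Sum>j\<in>I. G j y))"
    using insert by simp
  also have "\<dots> = (\<lambda>z. lin T (G i) z + lin T (\<lambda>y. \<Sum>j\<in>I. G j y) z)"
    by (rule lin_add) (use insert in \<open>auto intro: fin_sum_fun\<close>)
  also have "\<dots> = (\<lambda>z. \<Sum>j\<in>insert i I. lin T (G j) z)"
    using insert by simp
  finally show ?case .
qed

lemma lin_sum_dl:
  assumes "finite I"
  shows "lin T (\<lambda>y. \<Sum>i\<in>I. c i * dl (m i) y) = (\<lambda>z. \<Sum>i\<in>I. c i * T (m i) z)"
proof -
  have "lin T (\<lambda>y. \<Sum>i\<in>I. c i * dl (m i) y) = (\<lambda>z. \<Sum>i\<in>I. lin T (\<lambda>y. c i * dl (m i) y) z)"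
    by (rule lin_sum_fun[OF assms]) (auto simp: supp_def dl_def)
  also have "\<dots> = (\<lambda>z. \<Sum>i\<in>I. c i * T (m i) z)"
    by (simp add: lin_smult)
  finally show ?thesis .
qed

definition bdd :: "'a list \<Rightarrow> 'a list \<Rightarrow> 'f::field" where
  "bdd l = (if length l \<le> 1 then (\<lambda>_. 0) else (\<lambda>\<tau>. \<Sum>i<length l. (-1)^i * dl (del_nth i l) \<tau>))"

definition e :: "'a::linorder list \<Rightarrow> 'a list \<Rightarrow> 'f::field" where
  "e l = (\<lambda>\<sigma>. if distinct l \<and> \<sigma> = sort l then (-1)^(ninv l) else 0)"

definition R :: "('a::linorder list \<Rightarrow> 'f::field) \<Rightarrow> 'a list \<Rightarrow> 'f" where
  "R F = lin e F"

definition push :: "('a \<Rightarrow> 'b) \<Rightarrow> ('a list \<Rightarrow> 'f::field) \<Rightarrow> 'b list \<Rightarrow> 'f" where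
  "push \<phi> F = lin (\<lambda>l. dl (map \<phi> l)) F"

lemma fin_bdd: "fin (bdd l)"
proof (cases "length l \<le> 1")
  case True then show ?thesis by (simp add: bdd_def supp_def)
next
  case False
  then show ?thesis unfolding bdd_def
    by (simp, intro fin_sum_fun) (auto simp: supp_def dl_def)
qed

lemma supp_e: "supp (e l) \<subseteq> {sort l}"
  by (auto simp: e_def supp_def split: if_splits)

lemma fin_e: "fin (e l)"
  using supp_e finite_subset by fastforce

lemma fin_dl: "fin (dl l)"
  by simp

lemma fin_R: "fin F \<Longrightarrow> fin (R F)"
  unfolding R_def by (rule fin_lin) (auto intro: fin_e)

lemma fin_push: "fin F \<Longrightarrow> fin (push \<phi> F)"
  unfolding push_def by (rule fin_lin) auto

lemma del_nth_ne: "i < length l \<Longrightarrow> 2 \<le> length l \<Longrightarrow> del_nth i l \<noteq> []"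
  by (metis One_nat_def Suc_1 Suc_le_lessD diff_is_0_eq length_del_nth list.size(3) not_less)

lemma bdd_eq: "bdd \<sigma> \<tau> = (if \<tau> = [] then 0 else (\<Sum>i<length \<sigma>. if del_nth i \<sigma> = \<tau> then (-1)^i else 0))"
proof (cases "length \<sigma> \<le> 1")
  case True
  show ?thesis
  proof (cases "length \<sigma> = 0")
    case True then show ?thesis by (simp add: bdd_def)
  next
    case False
    with True have "length \<sigma> = 1" by linarith
    then show ?thesis by (auto simp: bdd_def del_nth_def)
  qed
next
  case False
  show ?thesis
  proof (cases "\<tau> = []")
    case True
    have "\<And>i. i < length \<sigma> \<Longrightarrow> [] \<noteq> del_nth i \<sigma>" using False del_nth_ne by fastforce
    then show ?thesis using False True by (auto simp: bdd_def dl_def intro!: sum.neutral)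
  next
    case f2: False
    then show ?thesis using False by (auto simp: bdd_def dl_def intro!: sum.cong)
  qed
qed

lemma bd_lin: "fin c \<Longrightarrow> bd c = lin bdd c"
  unfolding bd_def lin_def supp_def by (rule ext) (auto simp: bdd_eq sum_distrib_left)

lemma e_adj: "adj_alt (\<lambda>l. e l \<sigma>)"
  unfolding adj_alt_def
proof (intro allI impI)
  fix l :: "'a list" and j assume j: "Suc j < length l"
  show "e (sw j l) \<sigma> = - e l \<sigma>"
  proof (cases "distinct l")
    case False then show ?thesis by (simp add: e_def distinct_sw[OF j])
  next
    case True
    then have ne: "l!j \<noteq> l!Suc j" using j by (simp add: nth_eq_iff_index_eq)
    show ?thesis
    proof (cases "l!j < l!Suc j")
      case True
      then show ?thesis using ninv_sw_lt[OF j True] \<open>distinct l\<close>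
        by (simp add: e_def distinct_sw[OF j] sort_sw[OF j])
    next
      case False
      with ne have "l!Suc j < l!j" by simp
      then show ?thesis using ninv_sw_gt[OF j] \<open>distinct l\<close>
        by (simp add: e_def distinct_sw[OF j] sort_sw[OF j])
    qed
  qed
qed

lemma nondistinct_adj: "Suc j < length l \<Longrightarrow> l!j = l!Suc j \<Longrightarrow> \<not> distinct l"
  by (metis Suc_lessD distinct_conv_nth n_not_Suc_n)

lemma e_vanish: "vanish (\<lambda>l. e l \<sigma>)"
  unfolding vanish_def e_def using nondistinct_adj by fastforce

lemma e_sorted: "sorted_wrt (<) l \<Longrightarrow> e l = dl l"
  by (auto simp: e_def dl_def sorted_ninv0 strict_sorted_iff sorted_sort_id)

lemma e_nondistinct: "\<not> distinct l \<Longrightarrow> e l = (\<lambda>_. 0)"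
  by (simp add: e_def)

lemma del_nth_sw2: "Suc j < length l \<Longrightarrow> del_nth (Suc j) (sw j l) = del_nth j l"
  by (rule nth_equalityI) (auto simp: nth_del_nth sw_def nth_list_update less_Suc_eq)

lemma del_nth_sw_lt: "i < j \<Longrightarrow> Suc j < length l \<Longrightarrow> del_nth i (sw j l) = sw (j - 1) (del_nth i l)"
  by (rule nth_equalityI) (auto simp: nth_del_nth sw_def nth_list_update)

lemma del_nth_sw_gt: "Suc j < i \<Longrightarrow> i < length l \<Longrightarrow> del_nth i (sw j l) = sw j (del_nth i l)"
  by (rule nth_equalityI) (auto simp: nth_del_nth sw_def nth_list_update)

lemma del_nth_eq_adj: "Suc j < length l \<Longrightarrow> l!j = l!Suc j \<Longrightarrow> del_nth j l = del_nth (Suc j) l"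
  by (rule nth_equalityI) (auto simp: nth_del_nth less_Suc_eq)

lemma del_nth_nondistinct:
  assumes "Suc j < length l" "l!j = l!Suc j" "i < length l" "i \<noteq> j" "i \<noteq> Suc j"
  shows "\<not> distinct (del_nth i l)"
proof (cases "i < j")
  case True
  have "del_nth i l ! (j - 1) = l!j" "del_nth i l ! j = l ! Suc j"
    using assms True by (auto simp: nth_del_nth)
  moreover have "Suc (j - 1) < length (del_nth i l)" using assms True by simp
  ultimately show ?thesis using assms(2) True nondistinct_adj[of "j - 1" "del_nth i l"] by simp
next
  case False
  then have "Suc j < i" using assms by simp
  then have "del_nth i l ! j = l!j" "del_nth i l ! Suc j = l ! Suc j"
    using assms by (auto simp: nth_del_nth)
  moreover have "Suc j < length (del_nth i l)" using assms \<open>Suc j < i\<close> by simp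
  ultimately show ?thesis using assms(2) nondistinct_adj[of j "del_nth i l"] by simp
qed

lemma map_del_nth: "map \<phi> (del_nth i l) = del_nth i (map \<phi> l)"
  by (simp add: del_nth_def take_map drop_map)

lemma sorted_del_nth: "sorted_wrt (<) l \<Longrightarrow> sorted_wrt (<) (del_nth i l)"
proof -
  assume s: "sorted_wrt (<) l"
  have s2: "sorted_wrt (<) (take (Suc i) l @ drop (Suc i) l)" using s by (simp only: append_take_drop_id)
  then have cross: "\<forall>x\<in>set (take (Suc i) l). \<forall>y\<in>set (drop (Suc i) l). x < y"
    by (simp only: sorted_wrt_append) blast
  have "set (take i l) \<subseteq> set (take (Suc i) l)" by (rule set_take_subset_set_take) simp
  with cross have "\<forall>x\<in>set (take i l). \<forall>y\<in>set (drop (Suc i) l). x < y" by blast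
  then show ?thesis unfolding del_nth_def using s
    by (simp add: sorted_wrt_append sorted_wrt_take sorted_wrt_drop)
qed

lemma sgnop_mult: "sgnop n (x::'f::field) = (-1)^n * x"
  by (simp add: sgnop_def)

lemma e_form: "e l = (if distinct l then (\<lambda>\<sigma>. (-1)^(ninv l) * dl (sort l) \<sigma>) else (\<lambda>_. 0))"
  by (auto simp: e_def dl_def)

lemma lin_e_bdd: "lin e (bdd l) = (if length l \<le> 1 then (\<lambda>_. 0) else (\<lambda>\<tau>. \<Sum>i<length l. (-1)^i * e (del_nth i l) \<tau>))"
  by (simp add: bdd_def lin_sum_dl)

lemma G_adj: fixes \<tau> :: "'a::linorder list" shows "adj_alt (\<lambda>l. (lin e (bdd l) \<tau> :: 'f::field))"
  unfolding adj_alt_def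
proof (intro allI impI)
  fix l :: "'a list" and j assume j: "Suc j < length l"
  let ?n = "length l"
  let ?t = "\<lambda>i. (-1)^i * e (del_nth i l) \<tau> :: 'f"
  define \<pi> where "\<pi> i = (if i = j then Suc j else if i = Suc j then j else i)" for i
  have trm: "(-1)^i * e (del_nth i (sw j l)) \<tau> = - ?t (\<pi> i)" if i: "i < ?n" for i
  proof -
    consider "i = j" | "i = Suc j" | "i < j" | "Suc j < i" by linarith
    then show ?thesis
    proof cases
      case 1 then show ?thesis using j by (simp add: \<pi>_def del_nth_sw)
    next
      case 2 then show ?thesis using j by (simp add: \<pi>_def del_nth_sw2)
    next
      case 3
      have "Suc (j - 1) < length (del_nth i l)" using 3 j by simp
      then have "(e (sw (j-1) (del_nth i l)) \<tau> :: 'f) = - e (del_nth i l) \<tau>"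
        using e_adj unfolding adj_alt_def by blast
      then show ?thesis using 3 j by (simp add: \<pi>_def del_nth_sw_lt)
    next
      case 4
      have "Suc j < length (del_nth i l)" using 4 i by simp
      then have "(e (sw j (del_nth i l)) \<tau> :: 'f) = - e (del_nth i l) \<tau>"
        using e_adj unfolding adj_alt_def by blast
      then show ?thesis using 4 i by (simp add: \<pi>_def del_nth_sw_gt)
    qed
  qed
  have "lin e (bdd (sw j l)) \<tau> = (\<Sum>i<?n. (-1)^i * e (del_nth i (sw j l)) \<tau>)"
    using j by (simp add: lin_e_bdd)
  also have "\<dots> = (\<Sum>i<?n. - ?t (\<pi> i))"
    by (rule sum.cong) (auto simp: trm)
  also have "\<dots> = - (\<Sum>i<?n. ?t (\<pi> i))"
    by (simp add: sum_negf)
  also have "(\<Sum>i<?n. ?t (\<pi> i)) = (\<Sum>i<?n. ?t i)"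
    by (rule sum.reindex_bij_witness[where i=\<pi> and j=\<pi>]) (use j in \<open>auto simp: \<pi>_def\<close>)
  also have "(\<Sum>i<?n. ?t i) = lin e (bdd l) \<tau>"
    using j by (simp add: lin_e_bdd)
  finally show "(lin e (bdd (sw j l)) \<tau> :: 'f) = - lin e (bdd l) \<tau>" .
qed

lemma G_vanish: fixes \<tau> :: "'a::linorder list" shows "vanish (\<lambda>l. (lin e (bdd l) \<tau> :: 'f::field))"
  unfolding vanish_def
proof (intro allI impI)
  fix l :: "'a list" and j assume a: "Suc j < length l \<and> l!j = l!Suc j"
  let ?n = "length l"
  let ?t = "\<lambda>i. (-1)^i * e (del_nth i l) \<tau> :: 'f"
  have "lin e (bdd l) \<tau> = (\<Sum>i<?n. ?t i)"
    using a by (simp add: lin_e_bdd)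
  also have "\<dots> = (\<Sum>i\<in>{j, Suc j}. ?t i)"
  proof (rule sum.mono_neutral_right)
    show "\<forall>i\<in>{..<?n} - {j, Suc j}. ?t i = 0"
      using a del_nth_nondistinct[of j l] by (auto simp: e_nondistinct)
  qed (use a in auto)
  also have "\<dots> = 0"
    using a del_nth_eq_adj[of j l] by simp
  finally show "(lin e (bdd l) \<tau> :: 'f) = 0" .
qed

lemma supp_bdd: "supp (bdd m :: _ \<Rightarrow> 'f::field) \<subseteq> {del_nth i m | i. i < length m}"
proof
  fix \<tau> assume "\<tau> \<in> supp (bdd m :: _ \<Rightarrow> 'f)"
  then have "(bdd m \<tau> :: 'f) \<noteq> 0" by simp
  then have "(\<Sum>i<length m. if del_nth i m = \<tau> then (-1)^i else 0) \<noteq> (0::'f)"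
    unfolding bdd_eq by (cases "\<tau> = []") auto
  then obtain i where "i \<in> {..<length m}" "(if del_nth i m = \<tau> then (-1)^i else 0) \<noteq> (0::'f)"
    by (rule sum.not_neutral_contains_not_neutral)
  then have "i < length m" "del_nth i m = \<tau>" by (auto split: if_splits)
  then show "\<tau> \<in> {del_nth i m | i. i < length m}" by blast
qed

lemma lin_e_sorted:
  assumes "\<And>\<sigma>. \<sigma> \<in> supp F \<Longrightarrow> sorted_wrt (<) \<sigma>" "fin F"
  shows "lin e F = F"
proof -
  have "lin e F = lin dl F" by (rule lin_cong) (use assms in \<open>auto simp: e_sorted\<close>)
  then show ?thesis using lin_id assms by simp
qed

lemma G_sorted:
  assumes s: "sorted_wrt (<) m" shows "lin e (bdd m) = (bdd m :: _ \<Rightarrow> 'f::field)"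
proof (rule lin_e_sorted)
  fix \<sigma> assume "\<sigma> \<in> supp (bdd m :: _ \<Rightarrow> 'f)"
  then have "\<sigma> \<in> {del_nth i m | i. i < length m}" by (rule subsetD[OF supp_bdd])
  then obtain i where "\<sigma> = del_nth i m" by blast
  then show "sorted_wrt (<) \<sigma>" using sorted_del_nth[OF s] by simp
qed (rule fin_bdd)

lemma G_eq: "lin e (bdd l) = (lin bdd (e l) :: _ \<Rightarrow> 'f::field)"
proof
  fix \<tau>
  have A: "(lin e (bdd l) \<tau> :: 'f) = (if distinct l then sgnop (ninv l) (lin e (bdd (sort l)) \<tau>) else 0)"
    by (rule alt_sort[OF G_adj G_vanish])
  show "(lin e (bdd l) \<tau> :: 'f) = lin bdd (e l) \<tau>"
  proof (cases "distinct l")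
    case True
    then have "sorted_wrt (<) (sort l)" by (simp add: strict_sorted_iff)
    then have "lin e (bdd (sort l)) = (bdd (sort l) :: _ \<Rightarrow> 'f)" by (rule G_sorted)
    moreover have "lin bdd (e l) \<tau> = ((-1)^(ninv l) * bdd (sort l) \<tau> :: 'f)"
      using True by (simp add: e_form lin_smult)
    ultimately show ?thesis using A True by (simp add: sgnop_mult)
  next
    case False
    then show ?thesis using A by (simp add: e_form)
  qed
qed

lemma bd_R: "fin F \<Longrightarrow> bd (R F) = R (bd F)"
proof -
  assume f: "fin F"
  have "bd (R F) = lin bdd (R F)" by (rule bd_lin[OF fin_R[OF f]])
  also have "\<dots> = lin bdd (lin e F)" by (simp add: R_def)
  also have "\<dots> = lin (\<lambda>l. lin bdd (e l)) F" by (rule lin_comp[OF f fin_e])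
  also have "\<dots> = lin (\<lambda>l. lin e (bdd l)) F" by (simp add: G_eq)
  also have "\<dots> = lin e (lin bdd F)" by (rule lin_comp[OF f fin_bdd, symmetric])
  also have "\<dots> = R (bd F)" by (simp add: R_def bd_lin[OF f])
  finally show ?thesis .
qed

lemma lin_push_bdd: "lin (\<lambda>m. dl (map \<phi> m)) (bdd l) = bdd (map \<phi> l)"
  by (auto simp: bdd_def lin_sum_dl map_del_nth)

lemma bd_push: "fin F \<Longrightarrow> bd (push \<phi> F) = push \<phi> (bd F)"
proof -
  assume f: "fin F"
  have "bd (push \<phi> F) = lin bdd (push \<phi> F)" by (rule bd_lin[OF fin_push[OF f]])
  also have "\<dots> = lin bdd (lin (\<lambda>l. dl (map \<phi> l)) F)" by (simp add: push_def)
  also have "\<dots> = lin (\<lambda>l. lin bdd (dl (map \<phi> l))) F" by (rule lin_comp[OF f]) simp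
  also have "\<dots> = lin (\<lambda>l. lin (\<lambda>m. dl (map \<phi> m)) (bdd l)) F" by (simp add: lin_push_bdd)
  also have "\<dots> = lin (\<lambda>m. dl (map \<phi> m)) (lin bdd F)" by (rule lin_comp[OF f fin_bdd, symmetric])
  also have "\<dots> = push \<phi> (bd F)" by (simp add: push_def bd_lin[OF f])
  finally show ?thesis .
qed

lemma map_sw: "Suc j < length l \<Longrightarrow> map \<phi> (sw j l) = sw j (map \<phi> l)"
  by (auto simp: sw_def map_update)

lemma e_map_adj: "adj_alt (\<lambda>l. (e (map \<phi> l) \<tau> :: 'f::field))"
  unfolding adj_alt_def
proof (intro allI impI)
  fix l :: "'a list" and j assume j: "Suc j < length l"
  then have "Suc j < length (map \<phi> l)" by simp
  then show "(e (map \<phi> (sw j l)) \<tau> :: 'f) = - e (map \<phi> l) \<tau>"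
    using e_adj[of \<tau>, where 'b='f] j unfolding adj_alt_def by (simp add: map_sw)
qed

lemma e_map_vanish: "vanish (\<lambda>l. (e (map \<phi> l) \<tau> :: 'f::field))"
  unfolding vanish_def
proof (intro allI impI)
  fix l :: "'a list" and j assume "Suc j < length l \<and> l ! j = l ! Suc j"
  then have "\<not> distinct (map \<phi> l)" using nondistinct_adj[of j "map \<phi> l"] by simp
  then show "(e (map \<phi> l) \<tau> :: 'f) = 0" by (simp add: e_def)
qed

lemma lin_e_push_e: "lin e (lin (\<lambda>m. dl (map \<phi> m)) (e l)) = (e (map \<phi> l) :: _ \<Rightarrow> 'f::field)"
proof
  fix \<tau>
  have A: "(e (map \<phi> l) \<tau> :: 'f) = (if distinct l then sgnop (ninv l) (e (map \<phi> (sort l)) \<tau>) else 0)"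
    by (rule alt_sort[OF e_map_adj e_map_vanish])
  show "lin e (lin (\<lambda>m. dl (map \<phi> m)) (e l)) \<tau> = (e (map \<phi> l) \<tau> :: 'f)"
  proof (cases "distinct l")
    case True
    then show ?thesis using A by (simp add: e_form[of l] lin_smult sgnop_mult)
  next
    case False
    then show ?thesis using A by (simp add: e_form[of l])
  qed
qed

lemma R_push_R: "fin F \<Longrightarrow> R (push \<phi> (R F)) = R (push \<phi> F)"
proof -
  assume f: "fin F"
  have "R (push \<phi> (R F)) = lin e (lin (\<lambda>m. dl (map \<phi> m)) (lin e F))"
    by (simp add: R_def push_def)
  also have "\<dots> = lin e (lin (\<lambda>l. lin (\<lambda>m. dl (map \<phi> m)) (e l)) F)"
    by (simp add: lin_comp[OF f fin_e])
  also have "\<dots> = lin (\<lambda>l. lin e (lin (\<lambda>m. dl (map \<phi> m)) (e l))) F"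
    by (rule lin_comp[OF f]) (rule fin_lin[OF fin_e], simp)
  also have "\<dots> = lin (\<lambda>l. e (map \<phi> l)) F" by (simp add: lin_e_push_e)
  also have "\<dots> = lin (\<lambda>l. lin e (dl (map \<phi> l))) F" by simp
  also have "\<dots> = lin e (lin (\<lambda>m. dl (map \<phi> m)) F)" by (rule lin_comp[OF f, symmetric]) simp
  also have "\<dots> = R (push \<phi> F)" by (simp add: R_def push_def)
  finally show ?thesis .
qed

lemma push_comp: "fin F \<Longrightarrow> push \<psi> (push \<phi> F) = push (\<psi> \<circ> \<phi>) F"
proof -
  assume f: "fin F"
  have "push \<psi> (push \<phi> F) = lin (\<lambda>l. lin (\<lambda>m. dl (map \<psi> m)) (dl (map \<phi> l))) F"
    unfolding push_def by (rule lin_comp[OF f]) simp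
  also have "\<dots> = push (\<psi> \<circ> \<phi>) F" by (simp add: push_def)
  finally show ?thesis .
qed

lemma push_id: "fin F \<Longrightarrow> push id F = F"
  unfolding push_def by (simp add: lin_id)

lemma R_oriented: "fin F \<Longrightarrow> (\<And>\<sigma>. \<sigma> \<in> supp F \<Longrightarrow> sorted_wrt (<) \<sigma>) \<Longrightarrow> R F = F"
  unfolding R_def by (rule lin_e_sorted)

lemma push_cong:
  fixes F :: "'a list \<Rightarrow> 'f::field"
  assumes "\<And>l v. l \<in> supp F \<Longrightarrow> v \<in> set l \<Longrightarrow> \<phi> v = \<phi>' v"
  shows "push \<phi> F = push \<phi>' F"
  unfolding push_def
proof (rule lin_cong)
  fix l assume "l \<in> supp F"
  then have "map \<phi> l = map \<phi>' l" using assms by (intro map_cong) auto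
  then show "dl (map \<phi> l) = (dl (map \<phi>' l) :: _ \<Rightarrow> 'f)" by (simp only:)
qed

lemma supp_R:
  fixes F :: "'a::linorder list \<Rightarrow> 'f::field"
  shows "supp (R F) \<subseteq> {sort l | l. l \<in> supp F \<and> distinct l}"
proof
  fix \<sigma> assume "\<sigma> \<in> supp (R F)"
  then have "\<sigma> \<in> supp (lin e F)" by (simp add: R_def)
  then have "\<sigma> \<in> (\<Union>l\<in>supp F. supp (e l :: _ \<Rightarrow> 'f))" by (rule subsetD[OF supp_lin])
  then obtain l where l: "l \<in> supp F" "\<sigma> \<in> supp (e l :: _ \<Rightarrow> 'f)" by blast
  then have "(e l \<sigma> :: 'f) \<noteq> 0" by simp
  then have "distinct l" "\<sigma> = sort l" by (auto simp: e_def split: if_splits)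
  then show "\<sigma> \<in> {sort l | l. l \<in> supp F \<and> distinct l}" using l(1) by blast
qed

lemma supp_push:
  fixes F :: "'a list \<Rightarrow> 'f::field"
  shows "supp (push \<phi> F) \<subseteq> map \<phi> ` supp F"
proof
  fix \<tau> assume "\<tau> \<in> supp (push \<phi> F)"
  then have "\<tau> \<in> supp (lin (\<lambda>l. dl (map \<phi> l)) F)" by (simp add: push_def)
  then have "\<tau> \<in> (\<Union>l\<in>supp F. supp (dl (map \<phi> l) :: _ \<Rightarrow> 'f))" by (rule subsetD[OF supp_lin])
  then obtain l where l: "l \<in> supp F" "\<tau> \<in> supp (dl (map \<phi> l) :: _ \<Rightarrow> 'f)" by blast
  then show "\<tau> \<in> map \<phi> ` supp F" by auto
qed

lemma supp_bd:
  fixes F :: "'a list \<Rightarrow> 'f::field"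
  assumes f: "fin F" shows "supp (bd F) \<subseteq> {del_nth i l | i l. l \<in> supp F \<and> i < length l}"
proof
  fix \<tau> assume "\<tau> \<in> supp (bd F)"
  then have "\<tau> \<in> supp (lin bdd F)" by (simp add: bd_lin[OF f])
  then have "\<tau> \<in> (\<Union>l\<in>supp F. supp (bdd l :: _ \<Rightarrow> 'f))" by (rule subsetD[OF supp_lin])
  then obtain l where l: "l \<in> supp F" "\<tau> \<in> supp (bdd l :: _ \<Rightarrow> 'f)" by blast
  have "\<tau> \<in> {del_nth i l | i. i < length l}" using l(2) by (rule subsetD[OF supp_bdd])
  then show "\<tau> \<in> {del_nth i l | i l. l \<in> supp F \<and> i < length l}" using l(1) by blast
qed

definition Dh :: "'a \<Rightarrow> 'b \<Rightarrow> ('a \<Rightarrow> 'b) \<Rightarrow> 'a list \<Rightarrow> 'b list \<Rightarrow> 'f::field" where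
  "Dh x a g l = (if x \<in> set l then dl (a # map g l) else (\<lambda>_. 0))"

lemma supp_zero[simp]: "supp (\<lambda>_. 0) = {}"
  by (simp add: supp_def)

lemma fin_Dh: "fin (Dh x a g l)"
  by (cases "x \<in> set l") (auto simp: Dh_def)

lemma lin_sum_smult:
  assumes "finite I" "\<And>i. i \<in> I \<Longrightarrow> fin (G i)"
  shows "lin T (\<lambda>y. \<Sum>i\<in>I. c i * G i y) = (\<lambda>z. \<Sum>i\<in>I. c i * lin T (G i) z)"
proof -
  have "lin T (\<lambda>y. \<Sum>i\<in>I. c i * G i y) = (\<lambda>z. \<Sum>i\<in>I. lin T (\<lambda>y. c i * G i y) z)"
    by (rule lin_sum_fun[OF assms(1)]) (use assms(2) in \<open>auto simp: supp_def\<close>)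
  then show ?thesis by (simp add: lin_smult)
qed

lemma in_set_del_nth:
  assumes i: "i < length l"
  shows "v \<in> set (del_nth i l) \<longleftrightarrow> (\<exists>p<length l. p \<noteq> i \<and> l!p = v)"
proof
  assume "v \<in> set (del_nth i l)"
  then obtain p' where p': "p' < length l - 1" "del_nth i l ! p' = v"
    using i by (auto simp: in_set_conv_nth)
  show "\<exists>p<length l. p \<noteq> i \<and> l!p = v"
  proof (cases "p' < i")
    case True then show ?thesis using p' i by (intro exI[of _ p']) (auto simp: nth_del_nth)
  next
    case False then show ?thesis using p' i by (intro exI[of _ "Suc p'"]) (auto simp: nth_del_nth)
  qed
next
  assume "\<exists>p<length l. p \<noteq> i \<and> l!p = v"
  then obtain p where p: "p < length l" "p \<noteq> i" "l!p = v" by blast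
  show "v \<in> set (del_nth i l)"
  proof (cases "p < i")
    case True
    then have "del_nth i l ! p = v" "p < length (del_nth i l)" using p i by (auto simp: nth_del_nth)
    then show ?thesis by (metis nth_mem)
  next
    case False
    then have "del_nth i l ! (p - 1) = v" "p - 1 < length (del_nth i l)" using p i by (auto simp: nth_del_nth)
    then show ?thesis by (metis nth_mem)
  qed
qed

lemma lin_Dh_bdd:
  "lin (Dh x a g) (bdd l) = (\<lambda>\<tau>. \<Sum>i<length l. (-1)^i * (Dh x a g (del_nth i l) \<tau> :: 'f::field))"
proof (cases "length l \<le> 1")
  case True
  show ?thesis
  proof (cases "length l = 0")
    case True then show ?thesis by (simp add: bdd_def)
  next
    case False
    with True have "length l = 1" by linarith
    then show ?thesis by (auto simp: bdd_def Dh_def del_nth_def)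
  qed
next
  case False
  then show ?thesis by (simp add: bdd_def lin_sum_dl)
qed

lemma lin_e_Dh: "lin e (Dh x a g m) z = (if x \<in> set m then e (a # map g m) z else (0 :: 'f::field))"
  by (simp add: Dh_def)

lemma del_nth_Cons0: "del_nth 0 (a # xs) = xs"
  by (simp add: del_nth_def)

lemma del_nth_Cons_Suc: "del_nth (Suc i) (a # xs) = a # del_nth i xs"
  by (simp add: del_nth_def)

lemma homot_list:
  fixes f g :: "'a::linorder \<Rightarrow> 'b::linorder"
  assumes fx: "f x = a" and fg: "\<And>y. y \<noteq> x \<Longrightarrow> f y = g y"
  shows "lin e (lin bdd (Dh x a g l)) \<tau> + lin e (lin (Dh x a g) (bdd l)) \<tau>
         = (e (map g l) \<tau> :: 'f::field) - e (map f l) \<tau>"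
proof -
  let ?n = "length l"
  have L2: "lin e (lin (Dh x a g) (bdd l)) \<tau> =
      (\<Sum>i<?n. (-1)^i * (if x \<in> set (del_nth i l) then (e (a # map g (del_nth i l)) \<tau> :: 'f) else 0))"
  proof -
    have "lin e (lin (Dh x a g) (bdd l)) = (\<lambda>z. \<Sum>i<?n. (-1)^i * (lin e (Dh x a g (del_nth i l)) z :: 'f))"
      unfolding lin_Dh_bdd by (rule lin_sum_smult) (auto simp: fin_Dh)
    then show ?thesis by (simp add: lin_e_Dh if_distrib)
  qed
  show ?thesis
  proof (cases "x \<in> set l")
    case False
    then have "\<And>i. i < ?n \<Longrightarrow> x \<notin> set (del_nth i l)" using in_set_del_nth by (metis in_set_conv_nth)
    then have "lin e (lin (Dh x a g) (bdd l)) \<tau> = (0::'f)" using L2 by simp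
    moreover have "map f l = map g l" using False by (intro map_cong refl fg) auto
    ultimately show ?thesis using False by (simp add: Dh_def del: map_eq_conv)
  next
    case True
    then have n: "?n \<ge> 1" and lne: "l \<noteq> []" by (cases l, auto)+
    have L1: "lin e (lin bdd (Dh x a g l)) \<tau> =
        e (map g l) \<tau> + (\<Sum>i<?n. (-1)^(Suc i) * (e (a # map g (del_nth i l)) \<tau> :: 'f))"
    proof -
      have "lin bdd (Dh x a g l) = (bdd (a # map g l) :: _ \<Rightarrow> 'f)" using True by (simp add: Dh_def)
      also have "\<dots> = (\<lambda>\<tau>. \<Sum>i<Suc ?n. (-1)^i * dl (del_nth i (a # map g l)) \<tau>)"
        using lne by (simp add: bdd_def)
      finally have "lin e (lin bdd (Dh x a g l)) = (\<lambda>z. \<Sum>i<Suc ?n. (-1)^i * (e (del_nth i (a # map g l)) z :: 'f))"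
        by (simp del: sum.lessThan_Suc add: lin_sum_dl)
      then show ?thesis
        by (simp del: sum.lessThan_Suc add: sum.lessThan_Suc_shift del_nth_Cons0 del_nth_Cons_Suc map_del_nth)
    qed
    have S: "lin e (lin bdd (Dh x a g l)) \<tau> + lin e (lin (Dh x a g) (bdd l)) \<tau> =
      e (map g l) \<tau> - (\<Sum>i<?n. (-1)^i * (if x \<in> set (del_nth i l) then 0 else (e (a # map g (del_nth i l)) \<tau> :: 'f)))"
    proof -
      let ?E = "\<lambda>i. (e (a # map g (del_nth i l)) \<tau> :: 'f)"
      let ?c = "\<lambda>i. x \<in> set (del_nth i l)"
      have "(\<Sum>i<?n. (-1)^(Suc i) * ?E i) + (\<Sum>i<?n. (-1)^i * (if ?c i then ?E i else 0))
          = (\<Sum>i<?n. (-1)^(Suc i) * ?E i + (-1)^i * (if ?c i then ?E i else 0))"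
        by (rule sum.distrib[symmetric])
      also have "\<dots> = (\<Sum>i<?n. - ((-1)^i * (if ?c i then 0 else ?E i)))"
        by (rule sum.cong) auto
      also have "\<dots> = - (\<Sum>i<?n. (-1)^i * (if ?c i then 0 else ?E i))"
        by (rule sum_negf)
      finally show ?thesis unfolding L1 L2 by simp
    qed
    show ?thesis
    proof (cases "\<exists>p q. p < ?n \<and> q < ?n \<and> p \<noteq> q \<and> l!p = x \<and> l!q = x")
      case True
      then obtain p q where pq: "p < ?n" "q < ?n" "p \<noteq> q" "l!p = x" "l!q = x" by blast
      have all: "\<And>i. i < ?n \<Longrightarrow> x \<in> set (del_nth i l)"
        using pq in_set_del_nth by metis
      have "\<not> distinct (map h l)" for h :: "'a \<Rightarrow> 'b"
      proof
        assume "distinct (map h l)"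
        then have "\<forall>i<length l. \<forall>j<length l. i \<noteq> j \<longrightarrow> (map h l)!i \<noteq> (map h l)!j"
          by (simp add: distinct_conv_nth)
        then have "(map h l)!p \<noteq> (map h l)!q" using pq by blast
        then show False using pq by simp
      qed
      then show ?thesis using S all by (simp add: e_nondistinct[of "map g l"] e_nondistinct[of "map f l"])
    next
      case False
      from True obtain i0 where i0: "i0 < ?n" "l!i0 = x" by (auto simp: in_set_conv_nth)
      with False have uniq: "\<And>p. p < ?n \<Longrightarrow> l!p = x \<Longrightarrow> p = i0" by blast
      have mem: "\<And>i. i < ?n \<Longrightarrow> x \<in> set (del_nth i l) \<longleftrightarrow> i \<noteq> i0"
        using in_set_del_nth i0 uniq by metis
      have "(\<Sum>i<?n. (-1)^i * (if x \<in> set (del_nth i l) then 0 else (e (a # map g (del_nth i l)) \<tau> :: 'f)))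
          = (\<Sum>i\<in>{i0}. (-1)^i * (if x \<in> set (del_nth i l) then 0 else (e (a # map g (del_nth i l)) \<tau> :: 'f)))"
        by (rule sum.mono_neutral_right) (use i0 mem in auto)
      also have "\<dots> = (-1)^i0 * e (a # map g (del_nth i0 l)) \<tau>"
        using mem i0 by simp
      also have "map g (del_nth i0 l) = map f (del_nth i0 l)"
        using mem[OF i0(1)] by (intro map_cong refl fg[symmetric]) auto
      also have "a # map f (del_nth i0 l) = (map f l)!i0 # del_nth i0 (map f l)"
        using fx i0 by (simp add: map_del_nth)
      also have "e \<dots> \<tau> = sgnop i0 (e (map f l) \<tau> :: 'f)"
        by (rule alt_move_front[OF e_adj]) (use i0 in simp)
      finally show ?thesis using S by (simp add: sgnop_mult flip: power_add mult.assoc)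
    qed
  qed
qed

lemma homot:
  fixes f g :: "'a::linorder \<Rightarrow> 'b::linorder" and F :: "'a list \<Rightarrow> 'f::field"
  assumes F: "fin F" and fx: "f x = a" and fg: "\<And>y. y \<noteq> x \<Longrightarrow> f y = g y"
  shows "R (bd (lin (Dh x a g) F)) \<tau> + R (lin (Dh x a g) (bd F)) \<tau> = R (push g F) \<tau> - R (push f F) \<tau>"
proof -
  have fD: "fin (lin (Dh x a g) F :: _ \<Rightarrow> 'f)" by (rule fin_lin[OF F fin_Dh])
  have "R (bd (lin (Dh x a g) F)) = lin e (lin bdd (lin (Dh x a g) F))"
    by (simp add: R_def bd_lin[OF fD])
  also have "\<dots> = lin e (lin (\<lambda>l. lin bdd (Dh x a g l)) F)"
    by (simp add: lin_comp[OF F fin_Dh])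
  also have "\<dots> = lin (\<lambda>l. lin e (lin bdd (Dh x a g l))) F"
    by (rule lin_comp[OF F]) (rule fin_lin[OF fin_Dh fin_bdd])
  finally have A: "R (bd (lin (Dh x a g) F)) = lin (\<lambda>l. lin e (lin bdd (Dh x a g l))) F" .
  have "R (lin (Dh x a g) (bd F)) = lin e (lin (Dh x a g) (lin bdd F))"
    by (simp add: R_def bd_lin[OF F])
  also have "\<dots> = lin e (lin (\<lambda>l. lin (Dh x a g) (bdd l)) F)"
    by (simp add: lin_comp[OF F fin_bdd])
  also have "\<dots> = lin (\<lambda>l. lin e (lin (Dh x a g) (bdd l))) F"
    by (rule lin_comp[OF F]) (rule fin_lin[OF fin_bdd fin_Dh])
  finally have B: "R (lin (Dh x a g) (bd F)) = lin (\<lambda>l. lin e (lin (Dh x a g) (bdd l))) F" .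
  have C: "R (push h F) = (lin (\<lambda>l. e (map h l)) F :: _ \<Rightarrow> 'f)" for h :: "'a \<Rightarrow> 'b"
  proof -
    have "R (push h F) = lin e (lin (\<lambda>l. dl (map h l)) F)" by (simp add: R_def push_def)
    also have "\<dots> = lin (\<lambda>l. lin e (dl (map h l))) F" by (rule lin_comp[OF F]) simp
    finally show ?thesis by simp
  qed
  have "R (bd (lin (Dh x a g) F)) \<tau> + R (lin (Dh x a g) (bd F)) \<tau>
      = lin (\<lambda>l \<tau>. lin e (lin bdd (Dh x a g l)) \<tau> + lin e (lin (Dh x a g) (bdd l)) \<tau>) F \<tau>"
    unfolding A B lin_T_add by simp
  also have "\<dots> = lin (\<lambda>l \<tau>. e (map g l) \<tau> - e (map f l) \<tau>) F \<tau>"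
    by (simp add: homot_list[where f=f and g=g and x=x and a=a, OF fx fg])
  also have "\<dots> = R (push g F) \<tau> - R (push f F) \<tau>"
    unfolding C lin_T_minus by simp
  finally show ?thesis .
qed

lemma homot_cycle:
  fixes f g :: "'a::linorder \<Rightarrow> 'b::linorder" and z :: "'a list \<Rightarrow> 'f::field"
  assumes z: "fin z" "bd z = (\<lambda>_. 0)" and fx: "f x = a" and fg: "\<And>y. y \<noteq> x \<Longrightarrow> f y = g y"
  shows "(\<lambda>\<tau>. R (push g z) \<tau> - R (push f z) \<tau>) = bd (R (lin (Dh x a g) z))"
proof
  fix \<tau>
  have fD: "fin (lin (Dh x a g) z :: _ \<Rightarrow> 'f)" by (rule fin_lin[OF z(1) fin_Dh])
  have "bd (R (lin (Dh x a g) z)) \<tau> = R (bd (lin (Dh x a g) z)) \<tau>"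
    by (simp add: bd_R[OF fD])
  also have "\<dots> = R (bd (lin (Dh x a g) z)) \<tau> + R (lin (Dh x a g) (bd z)) \<tau>"
    using z(2) by (simp add: R_def)
  also have "\<dots> = R (push g z) \<tau> - R (push f z) \<tau>"
    by (rule homot[where f=f and g=g and x=x and a=a, OF z(1) fx fg])
  finally show "R (push g z) \<tau> - R (push f z) \<tau> = bd (R (lin (Dh x a g) z)) \<tau>" by simp
qed

definition subsp :: "('x \<Rightarrow> 'f::field) set \<Rightarrow> bool" where
  "subsp B \<longleftrightarrow> (\<lambda>_. 0) \<in> B \<and> (\<forall>u\<in>B. \<forall>v\<in>B. (\<lambda>x. u x + v x) \<in> B) \<and> (\<forall>c. \<forall>u\<in>B. (\<lambda>x. c * u x) \<in> B)"

definition cls :: "('x \<Rightarrow> 'f::field) set \<Rightarrow> ('x \<Rightarrow> 'f) \<Rightarrow> ('x \<Rightarrow> 'f) set" where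
  "cls B z = (\<lambda>b \<sigma>. z \<sigma> + b \<sigma>) ` B"

lemma subsp_0: "subsp B \<Longrightarrow> (\<lambda>_. 0) \<in> B"
  by (simp add: subsp_def)

lemma subsp_add: "subsp B \<Longrightarrow> u \<in> B \<Longrightarrow> v \<in> B \<Longrightarrow> (\<lambda>x. u x + v x) \<in> B"
  by (simp add: subsp_def)

lemma subsp_smult: "subsp B \<Longrightarrow> u \<in> B \<Longrightarrow> (\<lambda>x. c * u x) \<in> B"
  by (simp add: subsp_def)

lemma subsp_neg: "subsp B \<Longrightarrow> u \<in> B \<Longrightarrow> (\<lambda>x. - u x) \<in> B"
  using subsp_smult[of B u "-1"] by simp

lemma subsp_diff: "subsp B \<Longrightarrow> u \<in> B \<Longrightarrow> v \<in> B \<Longrightarrow> (\<lambda>x. u x - v x) \<in> B"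
  using subsp_add[of B u "\<lambda>x. - v x"] subsp_neg[of B v] by simp

lemma csumI: "a \<in> A \<Longrightarrow> a' \<in> A' \<Longrightarrow> w = (\<lambda>x. a x + a' x) \<Longrightarrow> w \<in> csum A A'"
  by (auto simp: csum_def)

lemma clsI: "b \<in> B \<Longrightarrow> w = (\<lambda>\<sigma>. z \<sigma> + b \<sigma>) \<Longrightarrow> w \<in> cls B z"
  by (auto simp: cls_def)

lemma cscaleI: "a \<in> A \<Longrightarrow> w = (\<lambda>x. c * a x) \<Longrightarrow> w \<in> cscale c A"
  by (auto simp: cscale_def)

lemma mem_cls: "subsp B \<Longrightarrow> w \<in> cls B u \<longleftrightarrow> (\<lambda>x. w x - u x) \<in> B"
proof
  assume "w \<in> cls B u"
  then obtain b where "b \<in> B" "w = (\<lambda>\<sigma>. u \<sigma> + b \<sigma>)" by (auto simp: cls_def)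
  then show "(\<lambda>x. w x - u x) \<in> B" by simp
next
  assume "(\<lambda>x. w x - u x) \<in> B"
  moreover have "w = (\<lambda>\<sigma>. u \<sigma> + (\<lambda>x. w x - u x) \<sigma>)" by simp
  ultimately show "w \<in> cls B u" by (rule clsI)
qed

lemma self_cls: "subsp B \<Longrightarrow> u \<in> cls B u"
  by (simp add: mem_cls subsp_0)

lemma cls_eq_iff:
  assumes B: "subsp B"
  shows "cls B u = cls B v \<longleftrightarrow> (\<lambda>x. u x - v x) \<in> B"
proof
  assume "cls B u = cls B v"
  then have "u \<in> cls B v" using self_cls[OF B, of u] by simp
  then show "(\<lambda>x. u x - v x) \<in> B" using mem_cls[OF B] by simp
next
  assume d: "(\<lambda>x. u x - v x) \<in> B"
  show "cls B u = cls B v"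
  proof (rule set_eqI)
    fix w
    have "(\<lambda>x. w x - u x) \<in> B \<longleftrightarrow> (\<lambda>x. w x - v x) \<in> B"
    proof
      assume "(\<lambda>x. w x - u x) \<in> B"
      from subsp_add[OF B this d] show "(\<lambda>x. w x - v x) \<in> B" by (simp add: algebra_simps)
    next
      assume "(\<lambda>x. w x - v x) \<in> B"
      from subsp_diff[OF B this d] show "(\<lambda>x. w x - u x) \<in> B" by (simp add: algebra_simps)
    qed
    then show "w \<in> cls B u \<longleftrightarrow> w \<in> cls B v" by (simp add: mem_cls[OF B])
  qed
qed

lemma csum_cls:
  assumes B: "subsp B"
  shows "csum (cls B u) (cls B v) = cls B (\<lambda>x. u x + v x)"
proof (rule set_eqI)
  fix w
  show "w \<in> csum (cls B u) (cls B v) \<longleftrightarrow> w \<in> cls B (\<lambda>x. u x + v x)"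
  proof
    assume "w \<in> csum (cls B u) (cls B v)"
    then obtain a a' where aa: "w = (\<lambda>x. a x + a' x)" "a \<in> cls B u" "a' \<in> cls B v"
      by (auto simp: csum_def)
    then have "(\<lambda>x. a x - u x) \<in> B" "(\<lambda>x. a' x - v x) \<in> B" by (auto simp: mem_cls[OF B])
    from subsp_add[OF B this] show "w \<in> cls B (\<lambda>x. u x + v x)"
      using aa by (simp add: mem_cls[OF B] algebra_simps)
  next
    assume "w \<in> cls B (\<lambda>x. u x + v x)"
    then have "(\<lambda>x. w x - v x) \<in> cls B u" by (simp add: mem_cls[OF B] algebra_simps)
    moreover have "v \<in> cls B v" by (rule self_cls[OF B])
    moreover have "w = (\<lambda>x. (w x - v x) + v x)" by simp
    ultimately show "w \<in> csum (cls B u) (cls B v)" by (rule csumI)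
  qed
qed

lemma cscale_cls:
  assumes B: "subsp B" and c: "c \<noteq> 0"
  shows "cscale c (cls B u) = cls B (\<lambda>x. c * u x)"
proof (rule set_eqI)
  fix w
  show "w \<in> cscale c (cls B u) \<longleftrightarrow> w \<in> cls B (\<lambda>x. c * u x)"
  proof
    assume "w \<in> cscale c (cls B u)"
    then obtain a where a: "a \<in> cls B u" "w = (\<lambda>x. c * a x)" by (auto simp: cscale_def)
    then have "(\<lambda>x. a x - u x) \<in> B" by (simp add: mem_cls[OF B])
    from subsp_smult[OF B this, of c] show "w \<in> cls B (\<lambda>x. c * u x)"
      using a by (simp add: mem_cls[OF B] algebra_simps)
  next
    assume "w \<in> cls B (\<lambda>x. c * u x)"
    then have "(\<lambda>x. w x - c * u x) \<in> B" by (simp add: mem_cls[OF B])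
    from subsp_smult[OF B this, of "inverse c"]
    have i: "(\<lambda>x. inverse c * (w x - c * u x)) \<in> B" by simp
    have "(\<lambda>x. inverse c * (w x - c * u x)) = (\<lambda>x. inverse c * w x - u x)"
      using c by (simp add: field_simps)
    with i have "(\<lambda>x. inverse c * w x - u x) \<in> B" by simp
    then have "(\<lambda>x. inverse c * w x) \<in> cls B u" by (simp add: mem_cls[OF B])
    moreover have "w = (\<lambda>x. c * (inverse c * w x))" using c by (simp add: mult.assoc[symmetric])
    ultimately show "w \<in> cscale c (cls B u)" by (rule cscaleI)
  qed
qed

lemma csum_cls_sub:
  assumes B: "subsp B" and B': "subsp B'" and sub: "B \<subseteq> B'"
  shows "csum (cls B u) B' = cls B' u"
proof (rule set_eqI)
  fix w
  show "w \<in> csum (cls B u) B' \<longleftrightarrow> w \<in> cls B' u"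
  proof
    assume "w \<in> csum (cls B u) B'"
    then obtain a b where ab: "w = (\<lambda>x. a x + b x)" "a \<in> cls B u" "b \<in> B'" by (auto simp: csum_def)
    then have "(\<lambda>x. a x - u x) \<in> B'" using sub by (auto simp: mem_cls[OF B])
    from subsp_add[OF B' this ab(3)] show "w \<in> cls B' u" using ab by (simp add: mem_cls[OF B'] algebra_simps)
  next
    assume "w \<in> cls B' u"
    then have "(\<lambda>x. w x - u x) \<in> B'" by (simp add: mem_cls[OF B'])
    moreover have "u \<in> cls B u" by (rule self_cls[OF B])
    moreover have "w = (\<lambda>x. u x + (w x - u x))" by simp
    ultimately show "w \<in> csum (cls B u) B'" by (intro csumI[of u _ "\<lambda>x. w x - u x"]) auto
  qed
qed

lemma csum_image_cls:
  assumes B: "subsp B" and B': "subsp B'"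
    and Ladd: "\<And>u v. L (\<lambda>x. u x + v x) = (\<lambda>x. L u x + L v x)"
    and LB: "\<And>b. b \<in> B \<Longrightarrow> L b \<in> B'"
  shows "csum (L ` cls B u) B' = cls B' (L u)"
proof (rule set_eqI)
  fix w
  show "w \<in> csum (L ` cls B u) B' \<longleftrightarrow> w \<in> cls B' (L u)"
  proof
    assume "w \<in> csum (L ` cls B u) B'"
    then obtain a b where ab: "w = (\<lambda>x. L a x + b x)" "a \<in> cls B u" "b \<in> B'" by (auto simp: csum_def)
    then have d: "(\<lambda>x. a x - u x) \<in> B" by (simp add: mem_cls[OF B])
    have "a = (\<lambda>x. u x + (a x - u x))" by simp
    then have "L a = (\<lambda>x. L u x + L (\<lambda>x. a x - u x) x)" by (metis Ladd)
    moreover have "L (\<lambda>x. a x - u x) \<in> B'" using LB d by blast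
    ultimately have "(\<lambda>x. L a x - L u x) \<in> B'" by simp
    from subsp_add[OF B' this ab(3)] show "w \<in> cls B' (L u)" using ab by (simp add: mem_cls[OF B'] algebra_simps)
  next
    assume "w \<in> cls B' (L u)"
    then have "(\<lambda>x. w x - L u x) \<in> B'" by (simp add: mem_cls[OF B'])
    moreover have "u \<in> cls B u" by (rule self_cls[OF B])
    moreover have "w = (\<lambda>x. L u x + (w x - L u x))" by simp
    ultimately show "w \<in> csum (L ` cls B u) B'" by (intro csumI[of "L u" _ "\<lambda>x. w x - L u x"]) auto
  qed
qed

definition dclosed :: "'a set set \<Rightarrow> bool" where
  "dclosed K \<longleftrightarrow> (\<forall>\<sigma>\<in>K. \<forall>\<tau>. \<tau> \<subseteq> \<sigma> \<and> \<tau> \<noteq> {} \<longrightarrow> \<tau> \<in> K)"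

definition cm :: "('a::linorder \<Rightarrow> 'b::linorder) \<Rightarrow> ('a list \<Rightarrow> 'f::field) \<Rightarrow> 'b list \<Rightarrow> 'f" where
  "cm h z = R (push h z)"

lemma chainsD: "c \<in> chains k K \<Longrightarrow> c \<sigma> \<noteq> 0 \<Longrightarrow> sorted_wrt (<) \<sigma> \<and> length \<sigma> = Suc k \<and> set \<sigma> \<in> K"
  by (auto simp: chains_def oriented_simplices_def)

lemma chainsI: "(\<And>\<sigma>. c \<sigma> \<noteq> 0 \<Longrightarrow> sorted_wrt (<) \<sigma> \<and> length \<sigma> = Suc k \<and> set \<sigma> \<in> K) \<Longrightarrow> c \<in> chains k K"
  by (auto simp: chains_def oriented_simplices_def)

lemma fin_chains:
  assumes "finite S" "K \<subseteq> Pow S" "c \<in> chains k K"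
  shows "fin c"
proof -
  have "supp c \<subseteq> {xs. set xs \<subseteq> S \<and> length xs = Suc k}"
  proof
    fix l assume "l \<in> supp c"
    then have "c l \<noteq> 0" by simp
    from chainsD[OF assms(3) this] have "set l \<in> K" "length l = Suc k" by auto
    with assms(2) show "l \<in> {xs. set xs \<subseteq> S \<and> length xs = Suc k}" by auto
  qed
  then show ?thesis using finite_lists_length_eq[OF assms(1)] finite_subset by blast
qed

lemma chains_subsp: "subsp (chains k K :: ('a::linorder list \<Rightarrow> 'f::field) set)"
  unfolding subsp_def
proof (intro conjI ballI allI)
  show "(\<lambda>_. 0) \<in> (chains k K :: ('a list \<Rightarrow> 'f) set)" by (rule chainsI) simp
next
  fix u v :: "'a list \<Rightarrow> 'f" assume uv: "u \<in> chains k K" "v \<in> chains k K"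
  show "(\<lambda>x. u x + v x) \<in> chains k K"
  proof (rule chainsI)
    fix \<sigma> assume "u \<sigma> + v \<sigma> \<noteq> 0"
    then have "u \<sigma> \<noteq> 0 \<or> v \<sigma> \<noteq> 0" by auto
    then show "sorted_wrt (<) \<sigma> \<and> length \<sigma> = Suc k \<and> set \<sigma> \<in> K" using chainsD[OF uv(1)] chainsD[OF uv(2)] by blast
  qed
next
  fix c :: 'f and u :: "'a list \<Rightarrow> 'f" assume u: "u \<in> chains k K"
  show "(\<lambda>x. c * u x) \<in> chains k K"
  proof (rule chainsI)
    fix \<sigma> assume "c * u \<sigma> \<noteq> 0"
    then have "u \<sigma> \<noteq> 0" by auto
    then show "sorted_wrt (<) \<sigma> \<and> length \<sigma> = Suc k \<and> set \<sigma> \<in> K" using chainsD[OF u] by blast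
  qed
qed

lemma bd_add:
  assumes "fin c" "fin c'"
  shows "bd (\<lambda>x. c x + c' x) = (\<lambda>x. bd c x + bd c' x)"
proof -
  have f: "fin (\<lambda>x. c x + c' x)" by (rule finite_subset[OF supp_add']) (use assms in auto)
  show ?thesis using assms by (simp add: bd_lin f lin_add)
qed

lemma fin_smult: fixes c :: "'x \<Rightarrow> 'f::field" shows "fin c \<Longrightarrow> fin (\<lambda>x. a * c x)"
  by (rule finite_subset[of _ "supp c"]) auto

lemma bd_smult:
  assumes "fin c" shows "bd (\<lambda>x. a * c x) = (\<lambda>x. a * bd c x)"
  using assms by (simp add: bd_lin fin_smult lin_smult)

lemma bd_zero: "bd (\<lambda>_::'a list. 0 :: 'f::field) = (\<lambda>_. 0)"
  by (simp add: bd_lin)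

lemma boundaries_subsp:
  assumes "finite S" "K \<subseteq> Pow S"
  shows "subsp (boundaries k K :: ('a::linorder list \<Rightarrow> 'f::field) set)"
  unfolding subsp_def boundaries_def
proof (intro conjI ballI allI)
  have "(\<lambda>_. 0) \<in> (chains (Suc k) K :: ('a list \<Rightarrow> 'f) set)" by (rule subsp_0[OF chains_subsp])
  then show "(\<lambda>_. 0) \<in> bd ` (chains (Suc k) K :: ('a list \<Rightarrow> 'f) set)"
    by (rule image_eqI[rotated]) (simp add: bd_zero)
next
  fix u v :: "'a list \<Rightarrow> 'f" assume "u \<in> bd ` chains (Suc k) K" "v \<in> bd ` chains (Suc k) K"
  then obtain c c' where c: "c \<in> chains (Suc k) K" "c' \<in> chains (Suc k) K" "u = bd c" "v = bd c'" by blast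
  have "fin c" "fin c'" using fin_chains[OF assms c(1)] fin_chains[OF assms c(2)] by auto
  then have "(\<lambda>x. u x + v x) = bd (\<lambda>x. c x + c' x)" using c by (simp add: bd_add)
  moreover have "(\<lambda>x. c x + c' x) \<in> chains (Suc k) K" using c chains_subsp subsp_add by blast
  ultimately show "(\<lambda>x. u x + v x) \<in> bd ` chains (Suc k) K" by blast
next
  fix a :: 'f and u :: "'a list \<Rightarrow> 'f" assume "u \<in> bd ` chains (Suc k) K"
  then obtain c where c: "c \<in> chains (Suc k) K" "u = bd c" by blast
  have "fin c" using fin_chains[OF assms c(1)] by auto
  then have "(\<lambda>x. a * u x) = bd (\<lambda>x. a * c x)" using c by (simp add: bd_smult)
  moreover have "(\<lambda>x. a * c x) \<in> chains (Suc k) K" using c chains_subsp subsp_smult by blast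
  ultimately show "(\<lambda>x. a * u x) \<in> bd ` chains (Suc k) K" by blast
qed

lemma set_del_nth_sub: "set (del_nth i l) \<subseteq> set l"
  unfolding del_nth_def using set_take_subset set_drop_subset by fastforce

lemma bd_chains:
  fixes c :: "'a::linorder list \<Rightarrow> 'f::field"
  assumes S: "finite S" "K \<subseteq> Pow S" and K: "dclosed K" and c: "c \<in> chains (Suc k) K"
  shows "bd c \<in> chains k K"
proof (rule chainsI)
  fix \<sigma> assume "bd c \<sigma> \<noteq> 0"
  then have "\<sigma> \<in> supp (bd c)" by simp
  then obtain i l where il: "\<sigma> = del_nth i l" "l \<in> supp c" "i < length l"
    using supp_bd[OF fin_chains[OF S c]] by blast
  then have l: "sorted_wrt (<) l" "length l = Suc (Suc k)" "set l \<in> K" using chainsD[OF c] by auto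
  have "sorted_wrt (<) \<sigma>" using il l sorted_del_nth by simp
  moreover have "length \<sigma> = Suc k" using il l by simp
  moreover have "set \<sigma> \<in> K"
  proof -
    have "set \<sigma> \<subseteq> set l" using il set_del_nth_sub by simp
    moreover have "set \<sigma> \<noteq> {}" using \<open>length \<sigma> = Suc k\<close> by auto
    ultimately show ?thesis using K l(3) unfolding dclosed_def by blast
  qed
  ultimately show "sorted_wrt (<) \<sigma> \<and> length \<sigma> = Suc k \<and> set \<sigma> \<in> K" by simp
qed

lemma boundaries_sub_chains:
  assumes "finite S" "K \<subseteq> Pow S" "dclosed K"
  shows "boundaries k K \<subseteq> (chains k K :: ('a::linorder list \<Rightarrow> 'f::field) set)"
  unfolding boundaries_def using bd_chains[OF assms] by blast

lemma cm_chains: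
  fixes z :: "'a::linorder list \<Rightarrow> 'f::field" and h :: "'a \<Rightarrow> 'b::linorder"
  assumes z: "z \<in> chains k K" and h: "\<And>\<sigma>. \<sigma> \<in> K \<Longrightarrow> h ` \<sigma> \<in> K'"
  shows "cm h z \<in> chains k K'"
proof (rule chainsI)
  fix \<sigma> assume "cm h z \<sigma> \<noteq> 0"
  then have "\<sigma> \<in> supp (R (push h z))" by (simp add: cm_def)
  then obtain l where l: "\<sigma> = sort l" "l \<in> supp (push h z)" "distinct l"
    using supp_R by blast
  then obtain l0 where l0: "l = map h l0" "l0 \<in> supp z" using supp_push by blast
  then have l0p: "length l0 = Suc k" "set l0 \<in> K" using chainsD[OF z] by auto
  have "sorted_wrt (<) \<sigma>" using l by (simp add: strict_sorted_iff)
  moreover have "length \<sigma> = Suc k" using l l0 l0p by simp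
  moreover have "set \<sigma> \<in> K'" using l l0 h[OF l0p(2)] by simp
  ultimately show "sorted_wrt (<) \<sigma> \<and> length \<sigma> = Suc k \<and> set \<sigma> \<in> K'" by simp
qed

lemma cm_add:
  fixes z z' :: "'a::linorder list \<Rightarrow> 'f::field" and h :: "'a \<Rightarrow> 'b::linorder"
  assumes "fin z" "fin z'"
  shows "cm h (\<lambda>x. z x + z' x) = (\<lambda>x. cm h z x + cm h z' x)"
  using assms by (simp add: cm_def R_def push_def lin_add fin_push[unfolded push_def])

lemma cm_smult:
  fixes z :: "'a::linorder list \<Rightarrow> 'f::field" and h :: "'a \<Rightarrow> 'b::linorder"
  shows "cm h (\<lambda>x. a * z x) = (\<lambda>x. a * cm h z x)"
  by (simp add: cm_def R_def push_def lin_smult)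

lemma cm_zero: "cm h (\<lambda>_::'a::linorder list. 0 :: 'f::field) = (\<lambda>_. 0)"
  by (simp add: cm_def R_def push_def)

lemma cm_bd:
  fixes z :: "'a::linorder list \<Rightarrow> 'f::field" and h :: "'a \<Rightarrow> 'b::linorder"
  assumes "fin z" shows "bd (cm h z) = cm h (bd z)"
  using assms by (simp add: cm_def bd_R fin_push bd_push)

lemma cm_cycles:
  fixes z :: "'a::linorder list \<Rightarrow> 'f::field" and h :: "'a \<Rightarrow> 'b::linorder"
  assumes S: "finite S" "K \<subseteq> Pow S" and z: "z \<in> cycles k K" and h: "\<And>\<sigma>. \<sigma> \<in> K \<Longrightarrow> h ` \<sigma> \<in> K'"
  shows "cm h z \<in> cycles k K'"
proof -
  have zc: "z \<in> chains k K" "bd z = (\<lambda>_. 0)" using z by (auto simp: cycles_def)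
  have "bd (cm h z) = cm h (bd z)" by (rule cm_bd[OF fin_chains[OF S zc(1)]])
  then have "bd (cm h z) = (\<lambda>_. 0)" using zc cm_zero by simp
  then show ?thesis using cm_chains[OF zc(1) h] by (simp add: cycles_def)
qed

lemma cm_boundaries:
  fixes b :: "'a::linorder list \<Rightarrow> 'f::field" and h :: "'a \<Rightarrow> 'b::linorder"
  assumes S: "finite S" "K \<subseteq> Pow S" and b: "b \<in> boundaries k K" and h: "\<And>\<sigma>. \<sigma> \<in> K \<Longrightarrow> h ` \<sigma> \<in> K'"
  shows "cm h b \<in> boundaries k K'"
proof -
  obtain c where c: "c \<in> chains (Suc k) K" "b = bd c" using b by (auto simp: boundaries_def)
  have e1: "bd (cm h c) = cm h (bd c)" by (rule cm_bd[OF fin_chains[OF S c(1)]])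
  have "cm h b = bd (cm h c)" unfolding e1 c(2) ..
  moreover have "cm h c \<in> chains (Suc k) K'" by (rule cm_chains[OF c(1) h])
  ultimately show ?thesis by (simp add: boundaries_def)
qed

lemma cm_comp:
  fixes z :: "'a::linorder list \<Rightarrow> 'f::field" and h :: "'a \<Rightarrow> 'b::linorder" and g :: "'b \<Rightarrow> 'c::linorder"
  assumes "fin z" shows "cm g (cm h z) = cm (g \<circ> h) z"
  using assms by (simp add: cm_def R_push_R fin_push push_comp)

lemma cm_id_on:
  fixes z :: "'a::linorder list \<Rightarrow> 'f::field"
  assumes z: "fin z" and hv: "\<And>l v. l \<in> supp z \<Longrightarrow> v \<in> set l \<Longrightarrow> h v = v"
    and srt: "\<And>\<sigma>. \<sigma> \<in> supp z \<Longrightarrow> sorted_wrt (<) \<sigma>"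
  shows "cm h z = z"
proof -
  have "push h z = push id z" by (rule push_cong) (use hv in simp)
  then have "cm h z = R z" using z by (simp add: cm_def push_id)
  also have "R z = z" by (rule R_oriented[OF z srt])
  finally show ?thesis .
qed

lemma supp_Dh: "supp (Dh x a g l :: _ \<Rightarrow> 'f::field) \<subseteq> (if x \<in> set l then {a # map g l} else {})"
  by (auto simp: Dh_def supp_def dl_def)

lemma Dh_chain:
  fixes z :: "'a::linorder list \<Rightarrow> 'f::field" and g :: "'a \<Rightarrow> 'a"
  assumes z: "z \<in> chains k K" and K'': "dclosed K''"
    and sub: "\<And>\<sigma>. \<sigma> \<in> K \<Longrightarrow> x \<in> \<sigma> \<Longrightarrow> insert x (g ` \<sigma>) \<in> K''"
  shows "R (lin (Dh x x g) z) \<in> chains (Suc k) K''"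
proof (rule chainsI)
  fix \<sigma> assume "R (lin (Dh x x g) z) \<sigma> \<noteq> 0"
  then have "\<sigma> \<in> supp (R (lin (Dh x x g) z))" by simp
  then obtain l where l: "\<sigma> = sort l" "l \<in> supp (lin (Dh x x g) z)" "distinct l"
    using supp_R by blast
  have "l \<in> (\<Union>l0\<in>supp z. supp (Dh x x g l0 :: _ \<Rightarrow> 'f))" using l(2) by (rule subsetD[OF supp_lin])
  then obtain l0 where l0: "l0 \<in> supp z" "l \<in> supp (Dh x x g l0 :: _ \<Rightarrow> 'f)" by blast
  then have xl0: "x \<in> set l0" and ll0: "l = x # map g l0" using supp_Dh[of x x g l0] by (auto split: if_splits)
  have l0p: "length l0 = Suc k" "set l0 \<in> K" using chainsD[OF z] l0(1) by auto
  have "sorted_wrt (<) \<sigma>" using l by (simp add: strict_sorted_iff)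
  moreover have "length \<sigma> = Suc (Suc k)" using l ll0 l0p by simp
  moreover have "set \<sigma> = set l" using l(1) by (simp only: set_sort)
  then have "set \<sigma> = insert x (g ` set l0)" using ll0 by simp
  then have "set \<sigma> \<in> K''" using sub[OF l0p(2)] xl0 by simp
  ultimately show "sorted_wrt (<) \<sigma> \<and> length \<sigma> = Suc (Suc k) \<and> set \<sigma> \<in> K''" by simp
qed

lemma contig:
  fixes z :: "'a::linorder list \<Rightarrow> 'f::field" and r :: "'a \<Rightarrow> 'a"
  assumes S: "finite S" "K \<subseteq> Pow S" "K'' \<subseteq> Pow S" and K'': "dclosed K''"
    and z: "z \<in> cycles k K"
    and cont: "\<And>\<sigma>. \<sigma> \<in> K \<Longrightarrow> \<sigma> \<union> r ` \<sigma> \<in> K''"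
  shows "(\<lambda>x. cm r z x - z x) \<in> boundaries k K''"
proof -
  have zc: "z \<in> chains k K" "bd z = (\<lambda>_. 0)" using z by (auto simp: cycles_def)
  have fz: "fin z" by (rule fin_chains[OF S(1,2) zc(1)])
  have B: "subsp (boundaries k K'' :: ('a list \<Rightarrow> 'f) set)" by (rule boundaries_subsp[OF S(1,3)])
  have srt: "\<And>\<sigma>. \<sigma> \<in> supp z \<Longrightarrow> sorted_wrt (<) \<sigma>" using chainsD[OF zc(1)] by auto
  have vert: "\<And>l v. l \<in> supp z \<Longrightarrow> v \<in> set l \<Longrightarrow> v \<in> S" using chainsD[OF zc(1)] S(2) by fastforce
  define hF where "hF Fs y = (if y \<in> Fs then r y else y)" for Fs y
  have P: "(\<lambda>x. cm (hF Fs) z x - z x) \<in> boundaries k K''" if "Fs \<subseteq> S" for Fs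
  proof -
    have "finite Fs" using that S(1) finite_subset by blast
    then show ?thesis using that
    proof (induction Fs rule: finite_induct)
      case empty
      have "cm (hF {}) z = z" by (rule cm_id_on[OF fz _ srt]) (simp add: hF_def)
      then show ?case using subsp_0[OF B] by simp
    next
      case (insert x Fs)
      let ?f = "hF Fs" and ?g = "hF (insert x Fs)"
      have fx: "?f x = x" using insert by (simp add: hF_def)
      have fg: "\<And>y. y \<noteq> x \<Longrightarrow> ?f y = ?g y" by (simp add: hF_def)
      have eq: "(\<lambda>\<tau>. R (push ?g z) \<tau> - R (push ?f z) \<tau>) = bd (R (lin (Dh x x ?g) z))"
        by (rule homot_cycle[where f="?f" and g="?g" and x=x and a=x, OF fz zc(2) fx fg])
      have sub: "insert x (?g ` \<sigma>) \<in> K''" if "\<sigma> \<in> K" "x \<in> \<sigma>" for \<sigma>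
      proof -
        have "insert x (?g ` \<sigma>) \<subseteq> \<sigma> \<union> r ` \<sigma>" using that by (auto simp: hF_def)
        moreover have "insert x (?g ` \<sigma>) \<noteq> {}" by simp
        ultimately show ?thesis using cont[OF that(1)] K'' unfolding dclosed_def by blast
      qed
      have "R (lin (Dh x x ?g) z) \<in> chains (Suc k) K''" by (rule Dh_chain[OF zc(1) K'' sub])
      then have "bd (R (lin (Dh x x ?g) z)) \<in> boundaries k K''" by (simp add: boundaries_def)
      then have d1: "(\<lambda>\<tau>. cm ?g z \<tau> - cm ?f z \<tau>) \<in> boundaries k K''" using eq by (simp add: cm_def)
      have d2: "(\<lambda>\<tau>. cm ?f z \<tau> - z \<tau>) \<in> boundaries k K''" using insert by simp
      from subsp_add[OF B d1 d2] show ?case by simp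
    qed
  qed
  have "cm (hF S) z = cm r z"
    unfolding cm_def by (rule arg_cong[where f=R], rule push_cong) (use vert in \<open>auto simp: hF_def\<close>)
  with P[of S] show ?thesis by simp
qed

lemma rips_lev_sub: "rips_lev d S p \<subseteq> Pow S"
  by (auto simp: rips_lev_def rips_def split: prod.splits)

lemma rips_lev_dclosed: "dclosed (rips_lev d S p)"
  unfolding dclosed_def rips_lev_def rips_def
  by (auto split: prod.splits intro: finite_subset)

lemma valid_shift: "valid_dp p \<Longrightarrow> 0 \<le> \<epsilon> \<Longrightarrow> valid_dp (dp_shift \<epsilon> p)"
  by (auto simp: valid_dp_def dp_shift_def split: prod.splits)

lemma le_shift: "0 \<le> \<epsilon> \<Longrightarrow> dp_le p (dp_shift \<epsilon> p)"
  by (auto simp: dp_le_def dp_shift_def split: prod.splits)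

lemma shift_mono: "dp_le p q \<Longrightarrow> dp_le (dp_shift \<epsilon> p) (dp_shift \<epsilon> q)"
  by (auto simp: dp_le_def dp_shift_def split: prod.splits)

lemma shift_shift: "dp_shift \<epsilon> (dp_shift \<epsilon> p) = dp_shift (2*\<epsilon>) p"
  by (auto simp: dp_shift_def split: prod.splits)

lemma chains_mono: "K \<subseteq> K' \<Longrightarrow> chains k K \<subseteq> chains k K'"
  by (auto simp: chains_def oriented_simplices_def)

lemma boundaries_mono: "K \<subseteq> K' \<Longrightarrow> boundaries k K \<subseteq> boundaries k K'"
  unfolding boundaries_def using chains_mono by blast

lemma homology_cls: "homology k K = {cls (boundaries k K) z | z. z \<in> cycles k K}"
  by (simp add: homology_def cls_def)

lemma csum_image_cls_fin:
  fixes L :: "('x \<Rightarrow> 'f::field) \<Rightarrow> ('y \<Rightarrow> 'f)"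
  assumes B: "subsp B" and B': "subsp B'" and u: "fin u" and Bf: "\<And>b. b \<in> B \<Longrightarrow> fin b"
    and Ladd: "\<And>u v. fin u \<Longrightarrow> fin v \<Longrightarrow> L (\<lambda>x. u x + v x) = (\<lambda>x. L u x + L v x)"
    and LB: "\<And>b. b \<in> B \<Longrightarrow> L b \<in> B'"
  shows "csum (L ` cls B u) B' = cls B' (L u)"
proof (rule set_eqI)
  fix w
  show "w \<in> csum (L ` cls B u) B' \<longleftrightarrow> w \<in> cls B' (L u)"
  proof
    assume "w \<in> csum (L ` cls B u) B'"
    then obtain a b where ab: "w = (\<lambda>x. L a x + b x)" "a \<in> cls B u" "b \<in> B'" by (auto simp: csum_def)
    then have d: "(\<lambda>x. a x - u x) \<in> B" by (simp add: mem_cls[OF B])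
    have "a = (\<lambda>x. u x + (a x - u x))" by simp
    then have "L a = (\<lambda>x. L u x + L (\<lambda>x. a x - u x) x)" using Ladd[OF u Bf[OF d]] by metis
    moreover have "L (\<lambda>x. a x - u x) \<in> B'" using LB d by blast
    ultimately have "(\<lambda>x. L a x - L u x) \<in> B'" by simp
    from subsp_add[OF B' this ab(3)] show "w \<in> cls B' (L u)" using ab by (simp add: mem_cls[OF B'] algebra_simps)
  next
    assume "w \<in> cls B' (L u)"
    then have "(\<lambda>x. w x - L u x) \<in> B'" by (simp add: mem_cls[OF B'])
    moreover have "u \<in> cls B u" by (rule self_cls[OF B])
    ultimately show "w \<in> csum (L ` cls B u) B'" by (intro csumI[of "L u" _ "\<lambda>x. w x - L u x"]) auto
  qed
qed

definition fmap :: "nat \<Rightarrow> real \<Rightarrow> ('a::linorder \<Rightarrow> 'b::linorder) \<Rightarrow> (real \<Rightarrow> 'b \<Rightarrow> 'b \<Rightarrow> real) \<Rightarrow> 'b set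
   \<Rightarrow> dynp \<Rightarrow> ('a list \<Rightarrow> 'f::field) set \<Rightarrow> ('b list \<Rightarrow> 'f) set" where
  "fmap k \<epsilon> h dY T p A = csum (cm h ` A) (boundaries k (rips_lev dY T (dp_shift \<epsilon> p)))"

locale simpmap =
  fixes k :: nat and \<epsilon> :: real and h :: "'a::linorder \<Rightarrow> 'b::linorder"
    and dX :: "real \<Rightarrow> 'a \<Rightarrow> 'a \<Rightarrow> real" and S :: "'a set"
    and dY :: "real \<Rightarrow> 'b \<Rightarrow> 'b \<Rightarrow> real" and T :: "'b set"
  assumes S: "finite S" and T: "finite T" and eps: "0 \<le> \<epsilon>"
    and simp: "\<And>p \<sigma>. valid_dp p \<Longrightarrow> \<sigma> \<in> rips_lev dX S p \<Longrightarrow> h ` \<sigma> \<in> rips_lev dY T (dp_shift \<epsilon> p)"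
    and monoX: "\<And>p q. valid_dp p \<Longrightarrow> valid_dp q \<Longrightarrow> dp_le p q \<Longrightarrow> rips_lev dX S p \<subseteq> rips_lev dX S q"
    and monoY: "\<And>p q. valid_dp p \<Longrightarrow> valid_dp q \<Longrightarrow> dp_le p q \<Longrightarrow> rips_lev dY T p \<subseteq> rips_lev dY T q"
begin

abbreviation "BX p \<equiv> boundaries k (rips_lev dX S p)"
abbreviation "BY p \<equiv> boundaries k (rips_lev dY T p)"

lemma BXs: "subsp (BX p :: ('a list \<Rightarrow> 'f::field) set)"
  by (rule boundaries_subsp[OF S rips_lev_sub])

lemma BYs: "subsp (BY p :: ('b list \<Rightarrow> 'f::field) set)"
  by (rule boundaries_subsp[OF T rips_lev_sub])

lemma finX: "c \<in> chains k' (rips_lev dX S p) \<Longrightarrow> fin c"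
  by (rule fin_chains[OF S rips_lev_sub])

lemma BX_fin: "b \<in> (BX p :: ('a list \<Rightarrow> 'f::field) set) \<Longrightarrow> fin b"
  using boundaries_sub_chains[OF S rips_lev_sub rips_lev_dclosed] finX by blast

lemma fmap_cls:
  assumes p: "valid_dp p" and z: "z \<in> (cycles k (rips_lev dX S p) :: ('a list \<Rightarrow> 'f::field) set)"
  shows "fmap k \<epsilon> h dY T p (cls (BX p) z) = cls (BY (dp_shift \<epsilon> p)) (cm h z)"
  unfolding fmap_def
proof (rule csum_image_cls_fin[OF BXs BYs])
  have "z \<in> chains k (rips_lev dX S p)" using z by (simp add: cycles_def)
  then show "fin z" by (rule finX)
  show "\<And>b. b \<in> BX p \<Longrightarrow> fin b" by (rule BX_fin)
  show "\<And>u v. fin u \<Longrightarrow> fin v \<Longrightarrow> cm h (\<lambda>x. u x + v x) = (\<lambda>x. cm h u x + cm h v x)"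
    by (rule cm_add)
  show "\<And>b. b \<in> BX p \<Longrightarrow> cm h b \<in> BY (dp_shift \<epsilon> p)"
    by (rule cm_boundaries[OF S rips_lev_sub]) (auto intro: simp[OF p])
qed

lemma cm_cyc:
  assumes p: "valid_dp p" and z: "z \<in> (cycles k (rips_lev dX S p) :: ('a list \<Rightarrow> 'f::field) set)"
  shows "cm h z \<in> cycles k (rips_lev dY T (dp_shift \<epsilon> p))"
  by (rule cm_cycles[OF S rips_lev_sub z]) (rule simp[OF p])

lemma morph_lin:
  assumes p: "valid_dp p"
  shows "lin_map (fmap k \<epsilon> h dY T p) (homology k (rips_lev dX S p) :: ('a list \<Rightarrow> 'f::field) set set)
          (homology k (rips_lev dY T (dp_shift \<epsilon> p)))"
  unfolding lin_map_def
proof (intro conjI ballI allI impI)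
  fix A :: "('a list \<Rightarrow> 'f) set" assume "A \<in> homology k (rips_lev dX S p)"
  then obtain z where z: "A = cls (BX p) z" "z \<in> cycles k (rips_lev dX S p)" by (auto simp: homology_cls)
  have "fmap k \<epsilon> h dY T p A = cls (BY (dp_shift \<epsilon> p)) (cm h z)" using z fmap_cls[OF p z(2)] by simp
  then show "fmap k \<epsilon> h dY T p A \<in> homology k (rips_lev dY T (dp_shift \<epsilon> p))"
    unfolding homology_cls using cm_cyc[OF p z(2)] by blast
next
  fix A A' :: "('a list \<Rightarrow> 'f) set"
  assume "A \<in> homology k (rips_lev dX S p)" "A' \<in> homology k (rips_lev dX S p)"
  then obtain z z' where z: "A = cls (BX p) z" "z \<in> cycles k (rips_lev dX S p)"
    and z': "A' = cls (BX p) z'" "z' \<in> cycles k (rips_lev dX S p)" by (auto simp: homology_cls)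
  have zc: "z \<in> chains k (rips_lev dX S p)" "z' \<in> chains k (rips_lev dX S p)"
    using z(2) z'(2) by (auto simp: cycles_def)
  have fz: "fin z" "fin z'" using finX[OF zc(1)] finX[OF zc(2)] by auto
  have zz: "(\<lambda>x. z x + z' x) \<in> cycles k (rips_lev dX S p)"
  proof -
    have "(\<lambda>x. z x + z' x) \<in> chains k (rips_lev dX S p)" by (rule subsp_add[OF chains_subsp zc])
    moreover have "bd (\<lambda>x. z x + z' x) = (\<lambda>_. 0)" using z(2) z'(2) by (simp add: bd_add[OF fz] cycles_def)
    ultimately show ?thesis by (simp add: cycles_def)
  qed
  have "fmap k \<epsilon> h dY T p (csum A A') = fmap k \<epsilon> h dY T p (cls (BX p) (\<lambda>x. z x + z' x))"
    using z z' by (simp add: csum_cls[OF BXs])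
  also have "\<dots> = cls (BY (dp_shift \<epsilon> p)) (cm h (\<lambda>x. z x + z' x))" by (rule fmap_cls[OF p zz])
  also have "\<dots> = cls (BY (dp_shift \<epsilon> p)) (\<lambda>x. cm h z x + cm h z' x)" by (simp add: cm_add[OF fz])
  also have "\<dots> = csum (cls (BY (dp_shift \<epsilon> p)) (cm h z)) (cls (BY (dp_shift \<epsilon> p)) (cm h z'))"
    by (rule csum_cls[OF BYs, symmetric])
  also have "\<dots> = csum (fmap k \<epsilon> h dY T p A) (fmap k \<epsilon> h dY T p A')"
    using z z' fmap_cls[OF p z(2)] fmap_cls[OF p z'(2)] by simp
  finally show "fmap k \<epsilon> h dY T p (csum A A') = csum (fmap k \<epsilon> h dY T p A) (fmap k \<epsilon> h dY T p A')" .
next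
  fix c :: 'f and A :: "('a list \<Rightarrow> 'f) set"
  assume c: "c \<noteq> 0" and "A \<in> homology k (rips_lev dX S p)"
  then obtain z where z: "A = cls (BX p) z" "z \<in> cycles k (rips_lev dX S p)" by (auto simp: homology_cls)
  have zc: "z \<in> chains k (rips_lev dX S p)" using z(2) by (auto simp: cycles_def)
  have fz: "fin z" using finX[OF zc] .
  have zz: "(\<lambda>x. c * z x) \<in> cycles k (rips_lev dX S p)"
  proof -
    have "(\<lambda>x. c * z x) \<in> chains k (rips_lev dX S p)" by (rule subsp_smult[OF chains_subsp zc])
    moreover have "bd (\<lambda>x. c * z x) = (\<lambda>_. 0)" using z(2) by (simp add: bd_smult[OF fz] cycles_def)
    ultimately show ?thesis by (simp add: cycles_def)
  qed
  have "fmap k \<epsilon> h dY T p (cscale c A) = fmap k \<epsilon> h dY T p (cls (BX p) (\<lambda>x. c * z x))"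
    using z c by (simp add: cscale_cls[OF BXs])
  also have "\<dots> = cls (BY (dp_shift \<epsilon> p)) (cm h (\<lambda>x. c * z x))" by (rule fmap_cls[OF p zz])
  also have "\<dots> = cls (BY (dp_shift \<epsilon> p)) (\<lambda>x. c * cm h z x)" by (simp add: cm_smult)
  also have "\<dots> = cscale c (cls (BY (dp_shift \<epsilon> p)) (cm h z))" by (rule cscale_cls[OF BYs c, symmetric])
  also have "\<dots> = cscale c (fmap k \<epsilon> h dY T p A)" using z fmap_cls[OF p z(2)] by simp
  finally show "fmap k \<epsilon> h dY T p (cscale c A) = cscale c (fmap k \<epsilon> h dY T p A)" .
qed

lemma morph_nat:
  assumes p: "valid_dp p" and q: "valid_dp q" and pq: "dp_le p q"
    and A: "A \<in> (homology k (rips_lev dX S p) :: ('a list \<Rightarrow> 'f::field) set set)"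
  shows "fmap k \<epsilon> h dY T q (csum A (BX q)) = csum (fmap k \<epsilon> h dY T p A) (BY (dp_shift \<epsilon> q))"
proof -
  obtain z where z: "A = cls (BX p) z" "z \<in> cycles k (rips_lev dX S p)" using A by (auto simp: homology_cls)
  have sX: "BX p \<subseteq> (BX q :: ('a list \<Rightarrow> 'f) set)"
    by (rule boundaries_mono[OF monoX[OF p q pq]])
  have sY: "BY (dp_shift \<epsilon> p) \<subseteq> (BY (dp_shift \<epsilon> q) :: ('b list \<Rightarrow> 'f) set)"
    by (rule boundaries_mono[OF monoY[OF valid_shift[OF p eps] valid_shift[OF q eps] shift_mono[OF pq]]])
  have zq: "z \<in> cycles k (rips_lev dX S q)"
    using z(2) chains_mono[OF monoX[OF p q pq]] by (auto simp: cycles_def)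
  have "fmap k \<epsilon> h dY T q (csum A (BX q)) = fmap k \<epsilon> h dY T q (cls (BX q) z)"
    using z by (simp add: csum_cls_sub[OF BXs BXs sX])
  also have "\<dots> = cls (BY (dp_shift \<epsilon> q)) (cm h z)" by (rule fmap_cls[OF q zq])
  also have "\<dots> = csum (cls (BY (dp_shift \<epsilon> p)) (cm h z)) (BY (dp_shift \<epsilon> q))"
    by (rule csum_cls_sub[OF BYs BYs sY, symmetric])
  also have "\<dots> = csum (fmap k \<epsilon> h dY T p A) (BY (dp_shift \<epsilon> q))"
    using z fmap_cls[OF p z(2)] by simp
  finally show ?thesis .
qed

lemma morph: "shifted_morph \<epsilon> (fmap k \<epsilon> h dY T) (hom_module k dX S :: ('a list, 'f::field) dmod) (hom_module k dY T)"
  unfolding shifted_morph_def hom_module_def fst_conv snd_conv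
  using morph_lin morph_nat by blast

end

lemma interleave_thm:
  fixes \<psi> :: "'a::linorder \<Rightarrow> 'b::linorder" and \<psi>' :: "'b \<Rightarrow> 'a"
  assumes A1: "simpmap \<epsilon> \<psi> dX S dY T" and A2: "simpmap \<epsilon> \<psi>' dY T dX S"
    and cont: "\<And>p \<sigma>. valid_dp p \<Longrightarrow> \<sigma> \<in> rips_lev dX S p \<Longrightarrow> \<sigma> \<union> \<psi>' ` \<psi> ` \<sigma> \<in> rips_lev dX S (dp_shift (2*\<epsilon>) p)"
    and ret: "\<And>y. y \<in> T \<Longrightarrow> \<psi> (\<psi>' y) = y"
  shows "interleaved \<epsilon> (hom_module k dX S :: ('a list, 'f::field) dmod) (hom_module k dY T)"
proof -
  interpret F: simpmap k \<epsilon> \<psi> dX S dY T by (rule A1)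
  interpret G: simpmap k \<epsilon> \<psi>' dY T dX S by (rule A2)
  let ?f = "fmap k \<epsilon> \<psi> dY T" and ?g = "fmap k \<epsilon> \<psi>' dX S"
  have c1: "?g (dp_shift \<epsilon> p) (?f p A) = csum A (F.BX (dp_shift (2*\<epsilon>) p))"
    if p: "valid_dp p" and A: "A \<in> (homology k (rips_lev dX S p) :: ('a list \<Rightarrow> 'f) set set)" for p A
  proof -
    obtain z where z: "A = cls (F.BX p) z" "z \<in> cycles k (rips_lev dX S p)" using A by (auto simp: homology_cls)
    have zc: "z \<in> chains k (rips_lev dX S p)" using z(2) by (simp add: cycles_def)
    have fz: "fin z" by (rule F.finX[OF zc])
    have p1: "valid_dp (dp_shift \<epsilon> p)" by (rule valid_shift[OF p F.eps])
    have p2: "valid_dp (dp_shift (2*\<epsilon>) p)" using valid_shift[OF p, of "2*\<epsilon>"] F.eps by simp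
    have le2: "dp_le p (dp_shift (2*\<epsilon>) p)" using le_shift[of "2*\<epsilon>"] F.eps by simp
    have sX: "F.BX p \<subseteq> (F.BX (dp_shift (2*\<epsilon>) p) :: ('a list \<Rightarrow> 'f) set)"
      by (rule boundaries_mono[OF F.monoX[OF p p2 le2]])
    have "?f p A = cls (F.BY (dp_shift \<epsilon> p)) (cm \<psi> z)" using z F.fmap_cls[OF p z(2)] by simp
    then have "?g (dp_shift \<epsilon> p) (?f p A) = cls (F.BX (dp_shift \<epsilon> (dp_shift \<epsilon> p))) (cm \<psi>' (cm \<psi> z))"
      using G.fmap_cls[OF p1 F.cm_cyc[OF p z(2)]] by simp
    also have "\<dots> = cls (F.BX (dp_shift (2*\<epsilon>) p)) (cm (\<psi>' \<circ> \<psi>) z)"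
      by (simp add: shift_shift cm_comp[OF fz])
    also have "\<dots> = cls (F.BX (dp_shift (2*\<epsilon>) p)) z"
    proof -
      have "(\<lambda>x. cm (\<psi>' \<circ> \<psi>) z x - z x) \<in> F.BX (dp_shift (2*\<epsilon>) p)"
        by (rule contig[OF F.S rips_lev_sub rips_lev_sub rips_lev_dclosed z(2)])
           (metis cont[OF p] image_comp)
      then show ?thesis by (simp add: cls_eq_iff[OF F.BXs])
    qed
    also have "\<dots> = csum A (F.BX (dp_shift (2*\<epsilon>) p))"
      using z by (simp add: csum_cls_sub[OF F.BXs F.BXs sX])
    finally show ?thesis .
  qed
  have c2: "?f (dp_shift \<epsilon> p) (?g p A) = csum A (F.BY (dp_shift (2*\<epsilon>) p))"
    if p: "valid_dp p" and A: "A \<in> (homology k (rips_lev dY T p) :: ('b list \<Rightarrow> 'f) set set)" for p A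
  proof -
    obtain w where w: "A = cls (F.BY p) w" "w \<in> cycles k (rips_lev dY T p)" using A by (auto simp: homology_cls)
    have wc: "w \<in> chains k (rips_lev dY T p)" using w(2) by (simp add: cycles_def)
    have fw: "fin w" by (rule G.finX[OF wc])
    have p1: "valid_dp (dp_shift \<epsilon> p)" by (rule valid_shift[OF p F.eps])
    have p2: "valid_dp (dp_shift (2*\<epsilon>) p)" using valid_shift[OF p, of "2*\<epsilon>"] F.eps by simp
    have le2: "dp_le p (dp_shift (2*\<epsilon>) p)" using le_shift[of "2*\<epsilon>"] F.eps by simp
    have sY: "F.BY p \<subseteq> (F.BY (dp_shift (2*\<epsilon>) p) :: ('b list \<Rightarrow> 'f) set)"
      by (rule boundaries_mono[OF F.monoY[OF p p2 le2]])
    have "?g p A = cls (F.BX (dp_shift \<epsilon> p)) (cm \<psi>' w)" using w G.fmap_cls[OF p w(2)] by simp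
    then have "?f (dp_shift \<epsilon> p) (?g p A) = cls (F.BY (dp_shift \<epsilon> (dp_shift \<epsilon> p))) (cm \<psi> (cm \<psi>' w))"
      using F.fmap_cls[OF p1 G.cm_cyc[OF p w(2)]] by simp
    also have "\<dots> = cls (F.BY (dp_shift (2*\<epsilon>) p)) (cm (\<psi> \<circ> \<psi>') w)"
      by (simp add: shift_shift cm_comp[OF fw])
    also have "cm (\<psi> \<circ> \<psi>') w = w"
    proof (rule cm_id_on[OF fw])
      fix l v assume "l \<in> supp w" "v \<in> set l"
      then have "v \<in> T" using chainsD[OF wc] rips_lev_sub by fastforce
      then show "(\<psi> \<circ> \<psi>') v = v" by (simp add: ret)
    next
      fix \<sigma> assume "\<sigma> \<in> supp w"
      then show "sorted_wrt (<) \<sigma>" using chainsD[OF wc] by auto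
    qed
    also have "cls (F.BY (dp_shift (2*\<epsilon>) p)) w = csum A (F.BY (dp_shift (2*\<epsilon>) p))"
      using w by (simp add: csum_cls_sub[OF F.BYs F.BYs sY])
    finally show ?thesis .
  qed
  show ?thesis
    unfolding interleaved_def
  proof (intro exI conjI)
    show "shifted_morph \<epsilon> ?f (hom_module k dX S :: ('a list, 'f) dmod) (hom_module k dY T)" by (rule F.morph)
    show "shifted_morph \<epsilon> ?g (hom_module k dY T :: ('b list, 'f) dmod) (hom_module k dX S)" by (rule G.morph)
    show "\<forall>p. valid_dp p \<longrightarrow> (\<forall>A\<in>fst (hom_module k dX S :: ('a list, 'f) dmod) p.
            ?g (dp_shift \<epsilon> p) (?f p A) = snd (hom_module k dX S :: ('a list, 'f) dmod) p (dp_shift (2 * \<epsilon>) p) A)"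
      using c1 by (simp add: hom_module_def)
    show "\<forall>p. valid_dp p \<longrightarrow> (\<forall>A\<in>fst (hom_module k dY T :: ('b list, 'f) dmod) p.
            ?f (dp_shift \<epsilon> p) (?g p A) = snd (hom_module k dY T :: ('b list, 'f) dmod) p (dp_shift (2 * \<epsilon>) p) A)"
      using c2 by (simp add: hom_module_def)
  qed
qed

lemma inf_mono_int:
  fixes D :: "real \<Rightarrow> real"
  assumes "\<And>t. 0 \<le> D t" "a \<le> b" "a' \<le> a" "b \<le> b'"
  shows "Inf (D ` {a'..b'}) \<le> Inf (D ` {a..b})"
proof (rule cInf_superset_mono)
  show "D ` {a..b} \<noteq> {}" using assms by auto
  show "bdd_below (D ` {a'..b'})" using assms(1) by (intro bdd_belowI[of _ 0]) auto
  show "D ` {a..b} \<subseteq> D ` {a'..b'}" using assms by auto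
qed

lemma transfer:
  fixes D1 D2 :: "real \<Rightarrow> real"
  assumes H: "\<And>t. Inf (D2 ` {t-\<epsilon>..t+\<epsilon>}) \<le> D1 t + 2*\<epsilon>" and D2: "\<And>t. 0 \<le> D2 t"
    and ab: "a \<le> b" and e: "0 \<le> \<epsilon>"
  shows "Inf (D2 ` {a-\<epsilon>..b+\<epsilon>}) \<le> Inf (D1 ` {a..b}) + 2*\<epsilon>"
proof -
  have "Inf (D2 ` {a-\<epsilon>..b+\<epsilon>}) - 2*\<epsilon> \<le> Inf (D1 ` {a..b})"
  proof (rule cInf_greatest)
    show "D1 ` {a..b} \<noteq> {}" using ab by auto
  next
    fix x assume "x \<in> D1 ` {a..b}"
    then obtain t where t: "t \<in> {a..b}" "x = D1 t" by blast
    have "Inf (D2 ` {a-\<epsilon>..b+\<epsilon>}) \<le> Inf (D2 ` {t-\<epsilon>..t+\<epsilon>})"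
      by (rule inf_mono_int) (use D2 t e in auto)
    also have "\<dots> \<le> D1 t + 2*\<epsilon>" by (rule H)
    finally show "Inf (D2 ` {a-\<epsilon>..b+\<epsilon>}) - 2*\<epsilon> \<le> x" using t by simp
  qed
  then show ?thesis by simp
qed

lemma dms_nonneg: "dms X d \<Longrightarrow> x \<in> X \<Longrightarrow> y \<in> X \<Longrightarrow> 0 \<le> d t x y"
  by (simp add: dms_def)

lemma rips_lev_memI:
  assumes "\<sigma> \<subseteq> S" "finite \<sigma>" "\<sigma> \<noteq> {}" "\<And>x y. x \<in> \<sigma> \<Longrightarrow> y \<in> \<sigma> \<Longrightarrow> int_dist d a b x y \<le> \<delta>"
  shows "\<sigma> \<in> rips_lev d S (a, b, \<delta>)"
  using assms by (simp add: rips_lev_def rips_def)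

lemma rips_lev_memD:
  assumes "\<sigma> \<in> rips_lev d S (a, b, \<delta>)"
  shows "\<sigma> \<subseteq> S" "finite \<sigma>" "\<sigma> \<noteq> {}" "\<And>x y. x \<in> \<sigma> \<Longrightarrow> y \<in> \<sigma> \<Longrightarrow> int_dist d a b x y \<le> \<delta>"
  using assms by (auto simp: rips_lev_def rips_def)

lemma int_dist_mono:
  assumes nn: "\<And>t. 0 \<le> d t u v" and "a \<le> b" "a' \<le> a" "b \<le> b'"
  shows "int_dist d a' b' u v \<le> int_dist d a b u v"
  unfolding int_dist_def by (rule inf_mono_int) (use assms in auto)

lemma rips_lev_mono:
  assumes d: "dms X d" and S: "S \<subseteq> X" and p: "valid_dp p" and q: "valid_dp q" and pq: "dp_le p q"
  shows "rips_lev d S p \<subseteq> rips_lev d S q"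
proof
  fix \<sigma> assume s: "\<sigma> \<in> rips_lev d S p"
  obtain a b \<delta> where pp: "p = (a, b, \<delta>)" by (cases p) auto
  obtain a' b' \<delta>' where qq: "q = (a', b', \<delta>')" by (cases q) auto
  have le: "a' \<le> a" "b \<le> b'" "\<delta> \<le> \<delta>'" "a \<le> b" using pq p by (auto simp: pp qq dp_le_def valid_dp_def)
  note m = rips_lev_memD[OF s[unfolded pp]]
  show "\<sigma> \<in> rips_lev d S q" unfolding qq
  proof (rule rips_lev_memI[OF m(1-3)])
    fix x y assume xy: "x \<in> \<sigma>" "y \<in> \<sigma>"
    have "int_dist d a' b' x y \<le> int_dist d a b x y"
    proof (rule int_dist_mono)
      show "\<And>t. 0 \<le> d t x y" using xy m(1) S dms_nonneg[OF d] by blast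
    qed (use le in auto)
    also have "\<dots> \<le> \<delta>" by (rule m(4)[OF xy])
    finally show "int_dist d a' b' x y \<le> \<delta>'" using le by simp
  qed
qed

lemma int_dist_transfer:
  assumes H: "\<And>t. Inf ((\<lambda>t'. d2 t' u' v') ` {t-\<epsilon>..t+\<epsilon>}) \<le> d1 t u v + 2*\<epsilon>"
    and nn: "\<And>t. 0 \<le> d2 t u' v'" and ab: "a \<le> b" and e: "0 \<le> \<epsilon>"
  shows "int_dist d2 (a-\<epsilon>) (b+\<epsilon>) u' v' \<le> int_dist d1 a b u v + 2*\<epsilon>"
  unfolding int_dist_def using transfer[of "\<lambda>t. d2 t u' v'" \<epsilon> "\<lambda>t. d1 t u v", OF H nn ab e] .

lemma tripod_interleave:
  fixes dX :: "real \<Rightarrow> 'a::linorder \<Rightarrow> 'a \<Rightarrow> real" and dY :: "real \<Rightarrow> 'b::linorder \<Rightarrow> 'b \<Rightarrow> real"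
    and Z :: "'c set"
  assumes dX: "dms X dX" and dY: "dms Y dY" and e: "0 < \<epsilon>"
    and tri: "tripod Z \<phi>X \<phi>Y X Y" and t2: "tripod_2eps \<epsilon> dX dY Z \<phi>X \<phi>Y" and SX: "S \<subseteq> X"
  shows "\<exists>T. T \<subseteq> Y \<and> card T \<le> card S \<and>
           interleaved (2*\<epsilon>) (hom_module k dX S :: ('a list, 'f::field) dmod) (hom_module k dY T)"
proof -
  have finX: "finite X" using dX by (simp add: dms_def)
  have S: "finite S" using SX finX finite_subset by blast
  define zz where "zz x = (SOME z. z \<in> Z \<and> \<phi>X z = x)" for x
  have zz: "zz x \<in> Z \<and> \<phi>X (zz x) = x" if "x \<in> X" for x
  proof -
    have "\<exists>z. z \<in> Z \<and> \<phi>X z = x" using tri that by (auto simp: tripod_def)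
    then show ?thesis unfolding zz_def by (rule someI_ex)
  qed
  define \<psi> where "\<psi> x = \<phi>Y (zz x)" for x
  define T where "T = \<psi> ` S"
  define \<psi>' where "\<psi>' y = (SOME x. x \<in> S \<and> \<psi> x = y)" for y
  have \<psi>': "\<psi>' y \<in> S \<and> \<psi> (\<psi>' y) = y" if "y \<in> T" for y
  proof -
    have "\<exists>x. x \<in> S \<and> \<psi> x = y" using that by (auto simp: T_def)
    then show ?thesis unfolding \<psi>'_def by (rule someI_ex)
  qed
  have TY: "T \<subseteq> Y" using tri zz SX by (auto simp: T_def \<psi>_def tripod_def)
  have T: "finite T" using S by (simp add: T_def)
  have key1: "Inf ((\<lambda>t'. dY t' (\<psi> x) (\<psi> x')) ` {t-\<epsilon>..t+\<epsilon>}) \<le> dX t x x' + 2*\<epsilon>"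
    if "x \<in> S" "x' \<in> S" for x x' t
    using t2 zz[of x] zz[of x'] that SX unfolding tripod_2eps_def \<psi>_def by fastforce
  have key2: "Inf ((\<lambda>t'. dX t' x x') ` {t-\<epsilon>..t+\<epsilon>}) \<le> dY t (\<psi> x) (\<psi> x') + 2*\<epsilon>"
    if "x \<in> S" "x' \<in> S" for x x' t
    using t2 zz[of x] zz[of x'] that SX unfolding tripod_2eps_def \<psi>_def by fastforce
  have nnX: "\<And>x y t. x \<in> S \<Longrightarrow> y \<in> S \<Longrightarrow> 0 \<le> dX t x y" using dms_nonneg[OF dX] SX by blast
  have nnY: "\<And>x y t. x \<in> T \<Longrightarrow> y \<in> T \<Longrightarrow> 0 \<le> dY t x y" using dms_nonneg[OF dY] TY by blast
  have monoX: "\<And>p q. valid_dp p \<Longrightarrow> valid_dp q \<Longrightarrow> dp_le p q \<Longrightarrow> rips_lev dX S p \<subseteq> rips_lev dX S q"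
    by (rule rips_lev_mono[OF dX SX])
  have monoY: "\<And>p q. valid_dp p \<Longrightarrow> valid_dp q \<Longrightarrow> dp_le p q \<Longrightarrow> rips_lev dY T p \<subseteq> rips_lev dY T q"
    by (rule rips_lev_mono[OF dY TY])
  have e2: "0 \<le> 2*\<epsilon>" using e by simp
  have A1: "simpmap (2*\<epsilon>) \<psi> dX S dY T"
  proof (unfold_locales)
    fix p \<sigma> assume p: "valid_dp p" and s: "\<sigma> \<in> rips_lev dX S p"
    obtain a b \<delta> where pp: "p = (a, b, \<delta>)" by (cases p) auto
    have ab: "a \<le> b" using p by (simp add: pp valid_dp_def)
    note m = rips_lev_memD[OF s[unfolded pp]]
    show "\<psi> ` \<sigma> \<in> rips_lev dY T (dp_shift (2*\<epsilon>) p)"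
      unfolding pp dp_shift_def prod.case
    proof (rule rips_lev_memI)
      show "\<psi> ` \<sigma> \<subseteq> T" using m(1) by (auto simp: T_def)
      show "finite (\<psi> ` \<sigma>)" using m(2) by simp
      show "\<psi> ` \<sigma> \<noteq> {}" using m(3) by simp
      fix y y' assume "y \<in> \<psi> ` \<sigma>" "y' \<in> \<psi> ` \<sigma>"
      then obtain x x' where xx: "x \<in> \<sigma>" "x' \<in> \<sigma>" "y = \<psi> x" "y' = \<psi> x'" by blast
      have xS: "x \<in> S" "x' \<in> S" using xx m(1) by auto
      have yT: "\<psi> x \<in> T" "\<psi> x' \<in> T" using xS by (auto simp: T_def)
      have "int_dist dY (a - 2*\<epsilon>) (b + 2*\<epsilon>) (\<psi> x) (\<psi> x') \<le> int_dist dY (a - \<epsilon>) (b + \<epsilon>) (\<psi> x) (\<psi> x')"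
        by (rule int_dist_mono) (use nnY yT ab e in auto)
      also have "\<dots> \<le> int_dist dX a b x x' + 2*\<epsilon>"
        by (rule int_dist_transfer) (use key1 xS nnY yT ab e in auto)
      also have "\<dots> \<le> \<delta> + 2*\<epsilon>" using m(4)[OF xx(1,2)] by simp
      finally show "int_dist dY (a - 2*\<epsilon>) (b + 2*\<epsilon>) y y' \<le> \<delta> + 2*\<epsilon>" using xx by simp
    qed
  qed (use S T e monoX monoY in auto)
  have A2: "simpmap (2*\<epsilon>) \<psi>' dY T dX S"
  proof (unfold_locales)
    fix p \<sigma> assume p: "valid_dp p" and s: "\<sigma> \<in> rips_lev dY T p"
    obtain a b \<delta> where pp: "p = (a, b, \<delta>)" by (cases p) auto
    have ab: "a \<le> b" using p by (simp add: pp valid_dp_def)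
    note m = rips_lev_memD[OF s[unfolded pp]]
    show "\<psi>' ` \<sigma> \<in> rips_lev dX S (dp_shift (2*\<epsilon>) p)"
      unfolding pp dp_shift_def prod.case
    proof (rule rips_lev_memI)
      show "\<psi>' ` \<sigma> \<subseteq> S" using m(1) \<psi>' by auto
      show "finite (\<psi>' ` \<sigma>)" using m(2) by simp
      show "\<psi>' ` \<sigma> \<noteq> {}" using m(3) by simp
      fix x x' assume "x \<in> \<psi>' ` \<sigma>" "x' \<in> \<psi>' ` \<sigma>"
      then obtain y y' where yy: "y \<in> \<sigma>" "y' \<in> \<sigma>" "x = \<psi>' y" "x' = \<psi>' y'" by blast
      have yT: "y \<in> T" "y' \<in> T" using yy m(1) by auto
      have xS: "\<psi>' y \<in> S" "\<psi>' y' \<in> S" using \<psi>' yT by auto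
      have "int_dist dX (a - 2*\<epsilon>) (b + 2*\<epsilon>) (\<psi>' y) (\<psi>' y') \<le> int_dist dX (a - \<epsilon>) (b + \<epsilon>) (\<psi>' y) (\<psi>' y')"
        by (rule int_dist_mono) (use nnX xS ab e in auto)
      also have "\<dots> \<le> int_dist dY a b y y' + 2*\<epsilon>"
      proof (rule int_dist_transfer)
        fix t show "Inf ((\<lambda>t'. dX t' (\<psi>' y) (\<psi>' y')) ` {t - \<epsilon>..t + \<epsilon>}) \<le> dY t y y' + 2 * \<epsilon>"
          using key2[OF xS, of t] \<psi>' yT by simp
      qed (use nnX xS ab e in auto)
      also have "\<dots> \<le> \<delta> + 2*\<epsilon>" using m(4)[OF yy(1,2)] by simp
      finally show "int_dist dX (a - 2*\<epsilon>) (b + 2*\<epsilon>) x x' \<le> \<delta> + 2*\<epsilon>" using yy by simp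
    qed
  qed (use S T e monoX monoY in auto)
  have cont: "\<sigma> \<union> \<psi>' ` \<psi> ` \<sigma> \<in> rips_lev dX S (dp_shift (2*(2*\<epsilon>)) p)"
    if p: "valid_dp p" and s: "\<sigma> \<in> rips_lev dX S p" for p \<sigma>
  proof -
    obtain a b \<delta> where pp: "p = (a, b, \<delta>)" by (cases p) auto
    have ab: "a \<le> b" using p by (simp add: pp valid_dp_def)
    note m = rips_lev_memD[OF s[unfolded pp]]
    have rS: "\<psi>' ` \<psi> ` \<sigma> \<subseteq> S" using m(1) \<psi>' by (auto simp: T_def)
    have rep: "\<exists>v\<in>\<sigma>. w \<in> S \<and> \<psi> w = \<psi> v" if "w \<in> \<sigma> \<union> \<psi>' ` \<psi> ` \<sigma>" for w
      using that m(1) \<psi>' by (auto simp: T_def)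
    show ?thesis
      unfolding pp dp_shift_def prod.case
    proof (rule rips_lev_memI)
      show "\<sigma> \<union> \<psi>' ` \<psi> ` \<sigma> \<subseteq> S" using m(1) rS by auto
      show "finite (\<sigma> \<union> \<psi>' ` \<psi> ` \<sigma>)" using m(2) by simp
      show "\<sigma> \<union> \<psi>' ` \<psi> ` \<sigma> \<noteq> {}" using m(3) by simp
      fix w w' assume "w \<in> \<sigma> \<union> \<psi>' ` \<psi> ` \<sigma>" "w' \<in> \<sigma> \<union> \<psi>' ` \<psi> ` \<sigma>"
      then obtain v v' where vv: "v \<in> \<sigma>" "v' \<in> \<sigma>" "w \<in> S" "w' \<in> S" "\<psi> w = \<psi> v" "\<psi> w' = \<psi> v'"
        using rep by metis
      have vS: "v \<in> S" "v' \<in> S" using vv m(1) by auto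
      have yT: "\<psi> v \<in> T" "\<psi> v' \<in> T" using vS by (auto simp: T_def)
      have "int_dist dX (a - 2*(2*\<epsilon>)) (b + 2*(2*\<epsilon>)) w w' \<le> int_dist dX (a - \<epsilon> - \<epsilon>) (b + \<epsilon> + \<epsilon>) w w'"
        by (rule int_dist_mono) (use nnX vv ab e in auto)
      also have "\<dots> \<le> int_dist dY (a - \<epsilon>) (b + \<epsilon>) (\<psi> v) (\<psi> v') + 2*\<epsilon>"
      proof (rule int_dist_transfer)
        fix t show "Inf ((\<lambda>t'. dX t' w w') ` {t - \<epsilon>..t + \<epsilon>}) \<le> dY t (\<psi> v) (\<psi> v') + 2 * \<epsilon>"
          using key2[OF vv(3,4), of t] vv(5,6) by simp
      qed (use nnX vv ab e in auto)
      also have "int_dist dY (a - \<epsilon>) (b + \<epsilon>) (\<psi> v) (\<psi> v') \<le> int_dist dX a b v v' + 2*\<epsilon>"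
        by (rule int_dist_transfer) (use key1 vS nnY yT ab e in auto)
      also have "int_dist dX a b v v' \<le> \<delta>" by (rule m(4)[OF vv(1,2)])
      finally show "int_dist dX (a - 2*(2*\<epsilon>)) (b + 2*(2*\<epsilon>)) w w' \<le> \<delta> + 2*(2*\<epsilon>)" by simp
    qed
  qed
  have ret: "\<And>y. y \<in> T \<Longrightarrow> \<psi> (\<psi>' y) = y" using \<psi>' by blast
  have "interleaved (2*\<epsilon>) (hom_module k dX S :: ('a list, 'f) dmod) (hom_module k dY T)"
    by (rule interleave_thm[OF A1 A2 cont ret])
  moreover have "card T \<le> card S" unfolding T_def by (rule card_image_le[OF S])
  ultimately show ?thesis using TY by blast
qed

definition cspace :: "('x \<Rightarrow> 'f::field) set set \<Rightarrow> ('x \<Rightarrow> 'f) set \<Rightarrow> ('x \<Rightarrow> 'f) set \<Rightarrow> bool" where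
  "cspace C B Zc \<longleftrightarrow> subsp B \<and> subsp Zc \<and> C = {cls B z | z. z \<in> Zc}"

lemma cspace_zero: "cspace C B Zc \<Longrightarrow> cls B (\<lambda>_. 0) \<in> C"
  unfolding cspace_def using subsp_0 by blast

lemma cspace_mem:
  assumes cs: "cspace C B Zc" and A: "A \<in> C" and w: "w \<in> A"
  shows "A = cls B w"
proof -
  have B: "subsp B" using cs by (simp add: cspace_def)
  obtain z where z: "A = cls B z" "z \<in> Zc" using cs A by (auto simp: cspace_def)
  then have "(\<lambda>x. w x - z x) \<in> B" using w by (simp add: mem_cls[OF B])
  then have "(\<lambda>x. - (w x - z x)) \<in> B" by (rule subsp_neg[OF B])
  then have "(\<lambda>x. z x - w x) \<in> B" by simp
  then show ?thesis using z by (simp add: cls_eq_iff[OF B])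
qed

lemma cspace_ne:
  assumes cs: "cspace C B Zc" and A: "A \<in> C"
  shows "\<exists>w. w \<in> A"
proof -
  have B: "subsp B" using cs by (simp add: cspace_def)
  obtain z where z: "A = cls B z" using cs A by (auto simp: cspace_def)
  then show ?thesis using self_cls[OF B] by blast
qed

lemma cspace_csum:
  assumes cs: "cspace C B Zc" and "X \<in> C" "Y \<in> C"
  shows "csum X Y \<in> C"
proof -
  have B: "subsp B" and Z: "subsp Zc" using cs by (auto simp: cspace_def)
  obtain u v where "X = cls B u" "u \<in> Zc" "Y = cls B v" "v \<in> Zc" using cs assms by (auto simp: cspace_def)
  then show ?thesis using csum_cls[OF B] subsp_add[OF Z] cs by (auto simp: cspace_def)
qed

lemma cspace_cscale:
  assumes cs: "cspace C B Zc" and "X \<in> C" "c \<noteq> 0"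
  shows "cscale c X \<in> C"
proof -
  have B: "subsp B" and Z: "subsp Zc" using cs by (auto simp: cspace_def)
  obtain u where "X = cls B u" "u \<in> Zc" using cs assms by (auto simp: cspace_def)
  then show ?thesis using cscale_cls[OF B assms(3)] subsp_smult[OF Z] cs by (auto simp: cspace_def)
qed

lemma lin_map_zero:
  assumes cC: "cspace C B Zc" and cD: "cspace D B' Zc'" and G: "lin_map G C D"
  shows "G (cls B (\<lambda>_. 0)) = cls B' (\<lambda>_. 0)"
proof -
  have B: "subsp B" and B': "subsp B'" using cC cD by (auto simp: cspace_def)
  let ?Z = "cls B (\<lambda>_. 0)"
  have Z: "?Z \<in> C" by (rule cspace_zero[OF cC])
  have "csum ?Z ?Z = ?Z" using csum_cls[OF B] by simp
  then have e: "G ?Z = csum (G ?Z) (G ?Z)" using G Z unfolding lin_map_def by metis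
  have GZ: "G ?Z \<in> D" using G Z by (simp add: lin_map_def)
  then obtain w where w: "G ?Z = cls B' w" using cD by (auto simp: cspace_def)
  then have "cls B' w = cls B' (\<lambda>x. w x + w x)" using e csum_cls[OF B'] by simp
  then have "(\<lambda>x. w x - (w x + w x)) \<in> B'" by (simp add: cls_eq_iff[OF B'])
  then have "(\<lambda>x. w x - 0) \<in> B'" using subsp_neg[OF B'] by fastforce
  then show ?thesis using w by (simp add: cls_eq_iff[OF B'])
qed

lemma combo:
  assumes cC: "cspace C B Zc" and cD: "cspace D B' Zc'" and G: "lin_map G C D"
    and Bs: "set Bs \<subseteq> C" and zs: "length zs = length Bs" "\<And>i. i < length Bs \<Longrightarrow> zs!i \<in> Bs!i"
    and ws: "length ws = length Bs" "\<And>i. i < length Bs \<Longrightarrow> ws!i \<in> G (Bs!i)"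
  shows "m \<le> length Bs \<Longrightarrow> cls B (\<lambda>x. \<Sum>i<m. c i * (zs!i) x) \<in> C \<and>
           G (cls B (\<lambda>x. \<Sum>i<m. c i * (zs!i) x)) = cls B' (\<lambda>x. \<Sum>i<m. c i * (ws!i) x)"
proof (induction m)
  case 0
  then show ?case using cspace_zero[OF cC] lin_map_zero[OF cC cD G] by simp
next
  case (Suc m)
  have B: "subsp B" and B': "subsp B'" using cC cD by (auto simp: cspace_def)
  have m: "m < length Bs" using Suc by simp
  have BsC: "Bs!m \<in> C" using Bs m by auto
  have Bz: "Bs!m = cls B (zs!m)" by (rule cspace_mem[OF cC BsC zs(2)[OF m]])
  have GBD: "G (Bs!m) \<in> D" using G BsC by (simp add: lin_map_def)
  have Gw: "G (Bs!m) = cls B' (ws!m)" by (rule cspace_mem[OF cD GBD ws(2)[OF m]])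
  have one: "cls B (\<lambda>x. c m * (zs!m) x) \<in> C \<and> G (cls B (\<lambda>x. c m * (zs!m) x)) = cls B' (\<lambda>x. c m * (ws!m) x)"
  proof (cases "c m = 0")
    case True
    then show ?thesis using cspace_zero[OF cC] lin_map_zero[OF cC cD G] by simp
  next
    case False
    have "cls B (\<lambda>x. c m * (zs!m) x) = cscale (c m) (Bs!m)" using Bz cscale_cls[OF B False] by simp
    moreover have "G (cscale (c m) (Bs!m)) = cscale (c m) (G (Bs!m))" using G BsC False by (simp add: lin_map_def)
    moreover have "cscale (c m) (G (Bs!m)) = cls B' (\<lambda>x. c m * (ws!m) x)" using Gw cscale_cls[OF B' False] by simp
    ultimately show ?thesis using cspace_cscale[OF cC BsC False] by simp
  qed
  have IH: "cls B (\<lambda>x. \<Sum>i<m. c i * (zs!i) x) \<in> C \<and>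
           G (cls B (\<lambda>x. \<Sum>i<m. c i * (zs!i) x)) = cls B' (\<lambda>x. \<Sum>i<m. c i * (ws!i) x)"
    using Suc by simp
  have eqC: "cls B (\<lambda>x. \<Sum>i<Suc m. c i * (zs!i) x) = csum (cls B (\<lambda>x. \<Sum>i<m. c i * (zs!i) x)) (cls B (\<lambda>x. c m * (zs!m) x))"
    using csum_cls[OF B] by simp
  have eqD: "cls B' (\<lambda>x. \<Sum>i<Suc m. c i * (ws!i) x) = csum (cls B' (\<lambda>x. \<Sum>i<m. c i * (ws!i) x)) (cls B' (\<lambda>x. c m * (ws!m) x))"
    using csum_cls[OF B'] by simp
  show ?case
  proof
    show "cls B (\<lambda>x. \<Sum>i<Suc m. c i * (zs!i) x) \<in> C" unfolding eqC using cspace_csum[OF cC] IH one by blast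
    show "G (cls B (\<lambda>x. \<Sum>i<Suc m. c i * (zs!i) x)) = cls B' (\<lambda>x. \<Sum>i<Suc m. c i * (ws!i) x)"
      unfolding eqC eqD using G IH one by (simp add: lin_map_def)
  qed
qed

lemma indep_pullback:
  fixes C :: "('x \<Rightarrow> 'f::field) set set" and D :: "('y \<Rightarrow> 'f) set set"
  assumes cC: "cspace C B Zc" and cD: "cspace D B' Zc'" and G: "lin_map G C D"
    and Bs: "set Bs \<subseteq> C" and ind: "cls_indep D (map G Bs)"
  shows "cls_indep C Bs"
  unfolding cls_indep_def
proof (rule allI, rule allI, rule impI)
  fix c :: "nat \<Rightarrow> 'f" and zs
  assume a: "length zs = length Bs \<and> (\<forall>i<length Bs. zs ! i \<in> Bs ! i) \<and>
      (\<exists>A0\<in>C. (\<lambda>_. 0) \<in> A0 \<and> (\<lambda>x. \<Sum>i<length Bs. c i * (zs ! i) x) \<in> A0)"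
  have B: "subsp B" and B': "subsp B'" using cC cD by (auto simp: cspace_def)
  from a obtain A0 where A0: "A0 \<in> C" "(\<lambda>_. 0) \<in> A0" "(\<lambda>x. \<Sum>i<length Bs. c i * (zs ! i) x) \<in> A0" by blast
  have A0z: "A0 = cls B (\<lambda>_. 0)" by (rule cspace_mem[OF cC A0(1,2)])
  have A0s: "A0 = cls B (\<lambda>x. \<Sum>i<length Bs. c i * (zs ! i) x)" by (rule cspace_mem[OF cC A0(1,3)])
  define ws where "ws = map (\<lambda>i. SOME w. w \<in> G (Bs!i)) [0..<length Bs]"
  have wsl: "length ws = length Bs" by (simp add: ws_def)
  have wsi: "ws!i \<in> G (Bs!i)" if "i < length Bs" for i
  proof -
    have "Bs!i \<in> C" using Bs that by auto
    then have "G (Bs!i) \<in> D" using G by (simp add: lin_map_def)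
    then have "\<exists>w. w \<in> G (Bs!i)" by (rule cspace_ne[OF cD])
    then have "(SOME w. w \<in> G (Bs!i)) \<in> G (Bs!i)" by (rule someI_ex)
    then show ?thesis using that by (simp add: ws_def)
  qed
  have cmb: "G (cls B (\<lambda>x. \<Sum>i<length Bs. c i * (zs!i) x)) = cls B' (\<lambda>x. \<Sum>i<length Bs. c i * (ws!i) x)"
    using combo[OF cC cD G Bs _ _ wsl wsi, of zs "length Bs" c] a by simp
  have "G (cls B (\<lambda>_. 0)) = cls B' (\<lambda>_. 0)" by (rule lin_map_zero[OF cC cD G])
  then have eq: "cls B' (\<lambda>x. \<Sum>i<length Bs. c i * (ws!i) x) = cls B' (\<lambda>_. 0)"
    using cmb A0z A0s by simp
  have "\<exists>A0\<in>D. (\<lambda>_. 0) \<in> A0 \<and> (\<lambda>x. \<Sum>i<length (map G Bs). c i * (ws ! i) x) \<in> A0"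
  proof (intro bexI conjI)
    show "cls B' (\<lambda>_. 0) \<in> D" by (rule cspace_zero[OF cD])
    show "(\<lambda>_. 0) \<in> cls B' (\<lambda>_. 0)" by (rule self_cls[OF B'])
    show "(\<lambda>x. \<Sum>i<length (map G Bs). c i * (ws ! i) x) \<in> cls B' (\<lambda>_. 0)"
      using eq self_cls[OF B', of "\<lambda>x. \<Sum>i<length Bs. c i * (ws!i) x"] by simp
  qed
  moreover have "length ws = length (map G Bs)" "\<forall>i<length (map G Bs). ws ! i \<in> map G Bs ! i"
    using wsl wsi by auto
  ultimately show "\<forall>i<length Bs. c i = 0" using ind unfolding cls_indep_def by auto
qed

lemma rank_le:
  fixes V :: "('x, 'f::field) dmod" and W :: "('y, 'f) dmod"
  assumes cW: "cspace (fst W q) BW ZW" and cV: "cspace (fst V q') BV ZV"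
    and G: "lin_map G (fst W q) (fst V q')"
    and im: "snd V p' q' ` fst V p' \<subseteq> G ` (snd W p q ` fst W p)"
    and imW: "snd W p q ` fst W p \<subseteq> fst W q"
  shows "rank_map V p' q' \<le> rank_map W p q"
  unfolding rank_map_def
proof (rule Sup_subset_mono, rule subsetI)
  fix x assume "x \<in> {enat n |n. \<exists>As. length As = n \<and> set As \<subseteq> snd V p' q' ` fst V p' \<and> cls_indep (fst V q') As}"
  then have "\<exists>n As. x = enat n \<and> length As = n \<and> set As \<subseteq> snd V p' q' ` fst V p' \<and> cls_indep (fst V q') As"
    by (simp only: mem_Collect_eq) metis
  then obtain n As where As0: "x = enat n" "length As = n" "set As \<subseteq> snd V p' q' ` fst V p'" "cls_indep (fst V q') As"
    by auto
  then have As: "x = enat (length As)" "set As \<subseteq> snd V p' q' ` fst V p'" "cls_indep (fst V q') As" by simp_all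
  define Bs where "Bs = map (\<lambda>A. SOME B. B \<in> snd W p q ` fst W p \<and> G B = A) As"
  have pick: "(SOME B. B \<in> snd W p q ` fst W p \<and> G B = A) \<in> snd W p q ` fst W p \<and>
      G (SOME B. B \<in> snd W p q ` fst W p \<and> G B = A) = A" if "A \<in> set As" for A
  proof -
    have "A \<in> snd V p' q' ` fst V p'" using As(2) that by (rule subsetD)
    then have "A \<in> G ` (snd W p q ` fst W p)" using im by (rule subsetD[rotated])
    then obtain B where "B \<in> snd W p q ` fst W p" "A = G B" by (rule imageE)
    then have "\<exists>B. B \<in> snd W p q ` fst W p \<and> G B = A" by blast
    then show ?thesis by (rule someI_ex)
  qed
  have Bs1: "set Bs \<subseteq> snd W p q ` fst W p" unfolding Bs_def using pick by auto
  have Bs2: "map G Bs = As" unfolding Bs_def map_map by (rule map_idI) (use pick in simp)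
  have "set Bs \<subseteq> fst W q" using Bs1 imW by blast
  then have "cls_indep (fst W q) Bs"
    by (rule indep_pullback[OF cW cV G]) (simp add: Bs2 As(3))
  moreover have "length Bs = length As" by (simp add: Bs_def)
  ultimately have "\<exists>As'. length As' = length As \<and> set As' \<subseteq> snd W p q ` fst W p \<and> cls_indep (fst W q) As'"
    using Bs1 by blast
  then show "x \<in> {enat n |n. \<exists>As. length As = n \<and> set As \<subseteq> snd W p q ` fst W p \<and> cls_indep (fst W q) As}"
    using As(1) by blast
qed

definition modok :: "('x, 'f::field) dmod \<Rightarrow> bool" where
  "modok V \<longleftrightarrow> (\<forall>p. valid_dp p \<longrightarrow> (\<exists>B Zc. cspace (fst V p) B Zc)) \<and>
     (\<forall>p q. valid_dp p \<and> valid_dp q \<and> dp_le p q \<longrightarrow> lin_map (snd V p q) (fst V p) (fst V q)) \<and>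
     (\<forall>p q r. valid_dp p \<and> valid_dp q \<and> valid_dp r \<and> dp_le p q \<and> dp_le q r \<longrightarrow>
        (\<forall>A\<in>fst V p. snd V q r (snd V p q A) = snd V p r A))"

lemma cycles_subsp:
  assumes "finite S" "K \<subseteq> Pow S"
  shows "subsp (cycles k K :: ('a::linorder list \<Rightarrow> 'f::field) set)"
  unfolding subsp_def cycles_def
proof (intro conjI ballI allI)
  show "(\<lambda>_. 0) \<in> {c \<in> chains k K. bd c = (\<lambda>_. 0 :: 'f)}"
    using subsp_0[OF chains_subsp] bd_zero by auto
next
  fix u v :: "'a list \<Rightarrow> 'f" assume u: "u \<in> {c \<in> chains k K. bd c = (\<lambda>_. 0)}" and v: "v \<in> {c \<in> chains k K. bd c = (\<lambda>_. 0)}"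
  have f: "fin u" "fin v" using u v fin_chains[OF assms] by auto
  show "(\<lambda>x. u x + v x) \<in> {c \<in> chains k K. bd c = (\<lambda>_. 0)}"
    using u v subsp_add[OF chains_subsp] by (auto simp: bd_add[OF f])
next
  fix a :: 'f and u :: "'a list \<Rightarrow> 'f" assume u: "u \<in> {c \<in> chains k K. bd c = (\<lambda>_. 0)}"
  have f: "fin u" using u fin_chains[OF assms] by auto
  show "(\<lambda>x. a * u x) \<in> {c \<in> chains k K. bd c = (\<lambda>_. 0)}"
    using u subsp_smult[OF chains_subsp] by (auto simp: bd_smult[OF f])
qed

lemma hom_modok:
  assumes d: "dms X d" and SX: "S \<subseteq> X"
  shows "modok (hom_module k d S :: ('a::linorder list, 'f::field) dmod)"
proof -
  have S: "finite S" using d SX finite_subset by (auto simp: dms_def)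
  let ?B = "\<lambda>p. boundaries k (rips_lev d S p) :: ('a list \<Rightarrow> 'f) set"
  let ?Z = "\<lambda>p. cycles k (rips_lev d S p) :: ('a list \<Rightarrow> 'f) set"
  have Bs: "subsp (?B p)" for p by (rule boundaries_subsp[OF S rips_lev_sub])
  have Zs: "subsp (?Z p)" for p by (rule cycles_subsp[OF S rips_lev_sub])
  have cs: "cspace (homology k (rips_lev d S p)) (?B p) (?Z p)" for p
    using Bs Zs by (simp add: cspace_def homology_cls)
  have sm: "csum (cls (?B p) z) (?B q) = cls (?B q) z" if "valid_dp p" "valid_dp q" "dp_le p q" for p q z
    by (rule csum_cls_sub[OF Bs Bs boundaries_mono[OF rips_lev_mono[OF d SX that]]])
  have zq: "z \<in> ?Z q" if "valid_dp p" "valid_dp q" "dp_le p q" "z \<in> ?Z p" for p q z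
    using that chains_mono[OF rips_lev_mono[OF d SX that(1-3)]] by (auto simp: cycles_def)
  show ?thesis
    unfolding modok_def hom_module_def fst_conv snd_conv
  proof (intro conjI allI impI ballI)
    fix p show "\<exists>B Zc. cspace (homology k (rips_lev d S p) :: ('a list \<Rightarrow> 'f) set set) B Zc" using cs by blast
  next
    fix p q assume pq: "valid_dp p \<and> valid_dp q \<and> dp_le p q"
    show "lin_map (\<lambda>A. csum A (?B q)) (homology k (rips_lev d S p)) (homology k (rips_lev d S q))"
      unfolding lin_map_def homology_cls
    proof (intro conjI ballI allI impI)
      fix A assume "A \<in> {cls (?B p) z |z. z \<in> ?Z p}"
      then obtain z where z: "A = cls (?B p) z" "z \<in> ?Z p" by blast
      show "csum A (?B q) \<in> {cls (?B q) z |z. z \<in> ?Z q}"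
        using z sm[of p q z] zq[of p q z] pq by auto
    next
      fix A A' assume "A \<in> {cls (?B p) z |z. z \<in> ?Z p}" "A' \<in> {cls (?B p) z |z. z \<in> ?Z p}"
      then obtain z z' where z: "A = cls (?B p) z" "z \<in> ?Z p" "A' = cls (?B p) z'" "z' \<in> ?Z p" by blast
      show "csum (csum A A') (?B q) = csum (csum A (?B q)) (csum A' (?B q))"
        using z pq by (simp add: csum_cls[OF Bs] sm)
    next
      fix c :: 'f and A assume c: "c \<noteq> 0" and "A \<in> {cls (?B p) z |z. z \<in> ?Z p}"
      then obtain z where z: "A = cls (?B p) z" "z \<in> ?Z p" by blast
      show "csum (cscale c A) (?B q) = cscale c (csum A (?B q))"
        using z pq c by (simp add: cscale_cls[OF Bs c] sm)
    qed
  next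
    fix p q r and A :: "('a list \<Rightarrow> 'f) set" assume pqr: "valid_dp p \<and> valid_dp q \<and> valid_dp r \<and> dp_le p q \<and> dp_le q r"
      and "A \<in> homology k (rips_lev d S p)"
    then obtain z where z: "A = cls (?B p) z" "z \<in> ?Z p" by (auto simp: homology_cls)
    have pr: "dp_le p r" using pqr by (auto simp: dp_le_def split: prod.splits)
    show "csum (csum A (?B q)) (?B r) = csum A (?B r)"
      using z pqr pr by (simp add: sm)
  qed
qed

lemma lin_map_comp: "lin_map f C D \<Longrightarrow> lin_map g D E \<Longrightarrow> lin_map (g \<circ> f) C E"
  by (simp add: lin_map_def)

lemma dp_le_trans: "dp_le p q \<Longrightarrow> dp_le q r \<Longrightarrow> dp_le p r"
  by (auto simp: dp_le_def split: prod.splits)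

lemma shift_le_shift: "\<epsilon>0 \<le> \<eta> \<Longrightarrow> dp_le (dp_shift \<epsilon>0 q) (dp_shift \<eta> q)"
  by (auto simp: dp_le_def dp_shift_def split: prod.splits)

lemma rank_interleave:
  fixes V :: "('x, 'f::field) dmod" and W :: "('y, 'f) dmod"
  assumes mV: "modok V" and mW: "modok W" and il: "interleaved \<epsilon>0 V W" and e0: "0 \<le> \<epsilon>0" and \<eta>: "\<epsilon>0 \<le> \<eta>"
    and p: "valid_dp p" and q: "valid_dp q" and pq: "dp_le p q"
    and p': "valid_dp p'" and p'p: "p' = (case p of (a1,a2,a3) \<Rightarrow> (a1 + \<eta>, a2 - \<eta>, a3 - \<eta>))"
  shows "rank_map V p' (dp_shift \<eta> q) \<le> rank_map W p q"
proof -
  obtain f g where fm: "shifted_morph \<epsilon>0 f V W" and gm: "shifted_morph \<epsilon>0 g W V"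
    and fg: "\<forall>p. valid_dp p \<longrightarrow> (\<forall>A\<in>fst V p. g (dp_shift \<epsilon>0 p) (f p A) = snd V p (dp_shift (2*\<epsilon>0) p) A)"
    using il unfolding interleaved_def by blast
  let ?q' = "dp_shift \<eta> q" and ?q0 = "dp_shift \<epsilon>0 q" and ?p'' = "dp_shift \<epsilon>0 p'"
  have vq0: "valid_dp ?q0" by (rule valid_shift[OF q e0])
  have vq': "valid_dp ?q'" by (rule valid_shift[OF q]) (use e0 \<eta> in simp)
  have q0q': "dp_le ?q0 ?q'" by (rule shift_le_shift[OF \<eta>])
  have vp'': "valid_dp ?p''" by (rule valid_shift[OF p' e0])
  have p''p: "dp_le ?p'' p" using p'p \<eta> by (auto simp: dp_le_def dp_shift_def split: prod.splits)
  have p''q: "dp_le ?p'' q" by (rule dp_le_trans[OF p''p pq])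
  have v2: "valid_dp (dp_shift (2*\<epsilon>0) p')" using valid_shift[OF p', of "2*\<epsilon>0"] e0 by simp
  have le2: "dp_le p' (dp_shift (2*\<epsilon>0) p')" using le_shift[of "2*\<epsilon>0" p'] e0 by simp
  have l2q0: "dp_le (dp_shift (2*\<epsilon>0) p') ?q0" using shift_mono[OF p''q, of \<epsilon>0] by (simp add: shift_shift)
  have l1: "dp_le p' ?q0" by (rule dp_le_trans[OF le2 l2q0])
  obtain BW ZW where cW: "cspace (fst W q) BW ZW" using mW q unfolding modok_def by blast
  obtain BV ZV where cV: "cspace (fst V ?q') BV ZV" using mV vq' unfolding modok_def by blast
  have glin: "lin_map (g q) (fst W q) (fst V ?q0)" using gm q unfolding shifted_morph_def by blast
  have slin: "lin_map (snd V ?q0 ?q') (fst V ?q0) (fst V ?q')" using mV vq0 vq' q0q' unfolding modok_def by blast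
  let ?G = "snd V ?q0 ?q' \<circ> g q"
  have G: "lin_map ?G (fst W q) (fst V ?q')" by (rule lin_map_comp[OF glin slin])
  have imW: "snd W p q ` fst W p \<subseteq> fst W q"
    using mW p q pq unfolding modok_def lin_map_def by blast
  have im: "snd V p' ?q' ` fst V p' \<subseteq> ?G ` (snd W p q ` fst W p)"
  proof
    fix A' assume "A' \<in> snd V p' ?q' ` fst V p'"
    then obtain A where A: "A \<in> fst V p'" "A' = snd V p' ?q' A" by blast
    have fA: "f p' A \<in> fst W ?p''" using fm p' A(1) unfolding shifted_morph_def lin_map_def by blast
    let ?B0 = "snd W ?p'' p (f p' A)"
    have B0: "?B0 \<in> fst W p" using mW vp'' p p''p fA unfolding modok_def lin_map_def by blast
    have Bq: "snd W p q ?B0 = snd W ?p'' q (f p' A)"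
      using mW vp'' p q p''p pq fA unfolding modok_def by blast
    have "g q (snd W ?p'' q (f p' A)) = snd V (dp_shift \<epsilon>0 ?p'') ?q0 (g ?p'' (f p' A))"
      using gm vp'' q p''q fA unfolding shifted_morph_def by blast
    also have "g ?p'' (f p' A) = snd V p' (dp_shift (2*\<epsilon>0) p') A" using fg p' A(1) by blast
    also have "dp_shift \<epsilon>0 ?p'' = dp_shift (2*\<epsilon>0) p'" by (rule shift_shift)
    also have "snd V (dp_shift (2*\<epsilon>0) p') ?q0 (snd V p' (dp_shift (2*\<epsilon>0) p') A) = snd V p' ?q0 A"
      using mV p' v2 vq0 le2 l2q0 A(1) unfolding modok_def by blast
    finally have gq: "g q (snd W ?p'' q (f p' A)) = snd V p' ?q0 A" .
    have "?G (snd W p q ?B0) = snd V ?q0 ?q' (snd V p' ?q0 A)" using Bq gq by simp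
    also have "\<dots> = A'" using mV p' vq0 vq' l1 q0q' A unfolding modok_def by blast
    finally show "A' \<in> ?G ` (snd W p q ` fst W p)" using B0 by (metis image_eqI)
  qed
  show ?thesis by (rule rank_le[OF cW cV G im imW])
qed

lemma le6_shift: "0 \<le> \<eta> \<Longrightarrow> le6 a (r6_shift \<eta> a)"
  by (auto simp: le6_def r6_shift_def split: prod.splits)

lemma le6_trans: "le6 a b \<Longrightarrow> le6 b c \<Longrightarrow> le6 a c"
  by (auto simp: le6_def split: prod.splits)

lemma shift_ne: "0 < \<eta> \<Longrightarrow> r6_shift \<eta> a \<noteq> a"
  by (auto simp: r6_shift_def split: prod.splits)

lemma adm_convex: "admissible b \<Longrightarrow> admissible c \<Longrightarrow> le6 b a \<Longrightarrow> le6 a c \<Longrightarrow> admissible a"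
  by (auto simp: admissible_def le6_def dp_le_def split: prod.splits)

lemma triv_shift:
  assumes e: "0 < \<eta>" and t: "triv_nonadmissible (r6_shift \<eta> a)"
  shows "triv_nonadmissible a"
proof -
  have nb: "\<not> (\<exists>b. admissible b \<and> le6 b (r6_shift \<eta> a) \<and> b \<noteq> r6_shift \<eta> a)"
    and na: "\<not> admissible (r6_shift \<eta> a)" using t by (auto simp: triv_nonadmissible_def)
  have l: "le6 a (r6_shift \<eta> a)" using le6_shift e by simp
  have "\<not> admissible a" using nb l shift_ne[OF e, of a] by metis
  moreover have "\<not> (\<exists>b. admissible b \<and> le6 b a \<and> b \<noteq> a)"
  proof
    assume "\<exists>b. admissible b \<and> le6 b a \<and> b \<noteq> a"
    then obtain b where b: "admissible b" "le6 b a" by blast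
    then have "le6 b (r6_shift \<eta> a)" using le6_trans l by blast
    moreover have "b \<noteq> r6_shift \<eta> a" using b(1) na by blast
    ultimately show False using nb b(1) by blast
  qed
  ultimately show ?thesis by (simp add: triv_nonadmissible_def)
qed

lemma adm_shift_triv:
  assumes e: "0 < \<eta>" and ad: "admissible (r6_shift \<eta> a)" and na: "\<not> admissible a"
  shows "triv_nonadmissible a"
proof -
  have l: "le6 a (r6_shift \<eta> a)" using le6_shift e by simp
  have "\<not> (\<exists>b. admissible b \<and> le6 b a \<and> b \<noteq> a)"
    using adm_convex[OF _ ad _ l] na by blast
  then show ?thesis using na by (simp add: triv_nonadmissible_def)
qed

lemma interleaved_sym: "interleaved \<epsilon> V W \<Longrightarrow> interleaved \<epsilon> W V"
  unfolding interleaved_def by blast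

lemma ar_ineq:
  fixes V :: "('x, 'f::field) dmod" and W :: "('y, 'f) dmod"
  assumes mV: "modok V" and mW: "modok W" and il: "interleaved \<epsilon>0 V W" and e0: "0 \<le> \<epsilon>0"
    and e: "\<epsilon>0 \<le> \<eta>" and ep: "0 < \<eta>"
  shows "adapted_rank V (r6_shift \<eta> a) \<le> adapted_rank W a"
proof -
  obtain a1 a2 a3 a4 a5 a6 where aa: "a = (a1, a2, a3, a4, a5, a6)" by (cases a) auto
  have sh0: "r6_shift \<eta> (a1, a2, a3, a4, a5, a6) = (a1 + \<eta>, a2 - \<eta>, a3 - \<eta>, a4 - \<eta>, a5 + \<eta>, a6 + \<eta>)"
    by (simp add: r6_shift_def)
  have sh: "r6_shift \<eta> a = (a1 + \<eta>, a2 - \<eta>, a3 - \<eta>, a4 - \<eta>, a5 + \<eta>, a6 + \<eta>)"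
    by (simp add: aa sh0)
  show ?thesis
  proof (cases "admissible (r6_shift \<eta> a)")
    case True
    show ?thesis
    proof (cases "admissible a")
      case True
      note ad' = \<open>admissible (r6_shift \<eta> a)\<close>
      have p: "valid_dp (a1, a2, a3)" and q: "valid_dp (a4, a5, a6)" and pq: "dp_le (a1, a2, a3) (a4, a5, a6)"
        using True by (auto simp: aa admissible_def valid_dp_def)
      have p': "valid_dp (a1 + \<eta>, a2 - \<eta>, a3 - \<eta>)" using ad' by (auto simp: sh admissible_def valid_dp_def)
      have "rank_map V (a1 + \<eta>, a2 - \<eta>, a3 - \<eta>) (dp_shift \<eta> (a4, a5, a6)) \<le> rank_map W (a1, a2, a3) (a4, a5, a6)"
        by (rule rank_interleave[OF mV mW il e0 e p q pq p']) simp
      moreover have "dp_shift \<eta> (a4, a5, a6) = (a4 - \<eta>, a5 + \<eta>, a6 + \<eta>)" by (simp add: dp_shift_def)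
      ultimately show ?thesis using True ad' by (simp add: adapted_rank_def aa sh0)
    next
      case False
      then have "triv_nonadmissible a" using adm_shift_triv[OF ep \<open>admissible (r6_shift \<eta> a)\<close>] by simp
      then show ?thesis using False by (simp add: adapted_rank_def aa)
    qed
  next
    case False
    show ?thesis
    proof (cases "triv_nonadmissible (r6_shift \<eta> a)")
      case True
      then have t: "triv_nonadmissible a" by (rule triv_shift[OF ep])
      then have "\<not> admissible a" by (simp add: triv_nonadmissible_def)
      then show ?thesis using t by (simp add: adapted_rank_def aa)
    next
      case f2: False
      then show ?thesis using False by (simp add: adapted_rank_def sh)
    qed
  qed
qed

lemma erosion_le:
  fixes V :: "('x, 'f::field) dmod" and W :: "('y, 'f) dmod"
  assumes mV: "modok V" and mW: "modok W" and il: "interleaved \<epsilon>0 V W" and e0: "0 \<le> \<epsilon>0"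
  shows "erosion_dist V W \<le> ereal \<epsilon>0"
proof (rule dense_ge)
  fix x assume x: "ereal \<epsilon>0 < x"
  show "erosion_dist V W \<le> x"
  proof (cases x)
    case (real r)
    with x have r: "\<epsilon>0 < r" by simp
    have r0: "0 < r" using r e0 by simp
    have c1: "adapted_rank V (r6_shift r a) \<le> adapted_rank W a" for a
      using ar_ineq[OF mV mW il e0 _ r0] r by simp
    have c2: "adapted_rank W (r6_shift r a) \<le> adapted_rank V a" for a
      using ar_ineq[OF mW mV interleaved_sym[OF il] e0 _ r0] r by simp
    have "ereal r \<in> {ereal \<eta> | \<eta>. 0 < \<eta> \<and>
         (\<forall>a. adapted_rank V (r6_shift \<eta> a) \<le> adapted_rank W a \<and>
              adapted_rank W (r6_shift \<eta> a) \<le> adapted_rank V a)}"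
      using r0 c1 c2 by blast
    then show ?thesis unfolding erosion_dist_def real by (rule Inf_lower)
  next
    case PInf then show ?thesis by simp
  next
    case MInf then show ?thesis using x by simp
  qed
qed

lemma erosion_le_il:
  fixes V :: "('x, 'f::field) dmod" and W :: "('y, 'f) dmod"
  assumes mV: "modok V" and mW: "modok W"
  shows "erosion_dist V W \<le> interleaving_dist V W"
  unfolding interleaving_dist_def
  by (rule Inf_greatest) (auto intro: erosion_le[OF mV mW])

lemma hausdorff_mono:
  assumes "\<And>V W. V \<in> P \<Longrightarrow> W \<in> Q \<Longrightarrow> \<rho>1 V W \<le> \<rho>2 V W"
  shows "hausdorff \<rho>1 P Q \<le> hausdorff \<rho>2 P Q"
  unfolding hausdorff_def
proof (rule max.mono)
  show "(SUP V\<in>P. INF W\<in>Q. \<rho>1 V W) \<le> (SUP V\<in>P. INF W\<in>Q. \<rho>2 V W)"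
    by (rule SUP_mono) (use assms in \<open>blast intro: INF_mono\<close>)
  show "(SUP W\<in>Q. INF V\<in>P. \<rho>1 V W) \<le> (SUP W\<in>Q. INF V\<in>P. \<rho>2 V W)"
    by (rule SUP_mono) (use assms in \<open>blast intro: INF_mono\<close>)
qed

lemma dgm_modok:
  assumes "dms X d" "V \<in> (dgm_set k n X d :: ('a::linorder list, 'f::field) dmod set)"
  shows "modok V"
  using assms hom_modok by (auto simp: dgm_set_def)

lemma il_le: "0 \<le> \<epsilon> \<Longrightarrow> interleaved \<epsilon> V W \<Longrightarrow> interleaving_dist V W \<le> ereal \<epsilon>"
  unfolding interleaving_dist_def by (rule Inf_lower) blast

lemma tripod_sym: "tripod Z \<phi>X \<phi>Y X Y \<Longrightarrow> tripod Z \<phi>Y \<phi>X Y X"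
  by (simp add: tripod_def)

lemma tripod_2eps_sym: "tripod_2eps \<epsilon> dX dY Z \<phi>X \<phi>Y \<Longrightarrow> tripod_2eps \<epsilon> dY dX Z \<phi>Y \<phi>X"
  by (simp add: tripod_2eps_def)

lemma hausdorff_tripod:
  fixes X :: "'a::linorder set" and dX :: "real \<Rightarrow> 'a \<Rightarrow> 'a \<Rightarrow> real"
    and Y :: "'b::linorder set" and dY :: "real \<Rightarrow> 'b \<Rightarrow> 'b \<Rightarrow> real" and Z :: "'c set"
  assumes dX: "dms X dX" and dY: "dms Y dY" and e: "0 < \<epsilon>"
    and tri: "tripod Z \<phi>X \<phi>Y X Y" and t2: "tripod_2eps \<epsilon> dX dY Z \<phi>X \<phi>Y"
  shows "hausdorff interleaving_dist (dgm_set k n X dX :: ('a list, 'f::field) dmod set) (dgm_set k n Y dY :: ('b list, 'f) dmod set)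
         \<le> ereal (2*\<epsilon>)"
  unfolding hausdorff_def
proof (rule max.boundedI)
  show "(SUP V\<in>(dgm_set k n X dX :: ('a list, 'f) dmod set). INF W\<in>(dgm_set k n Y dY :: ('b list, 'f) dmod set). interleaving_dist V W) \<le> ereal (2*\<epsilon>)"
  proof (rule SUP_least)
    fix V assume "V \<in> (dgm_set k n X dX :: ('a list, 'f) dmod set)"
    then obtain S where S: "V = hom_module k dX S" "S \<subseteq> X" "card S \<le> n" by (auto simp: dgm_set_def)
    obtain T where T: "T \<subseteq> Y" "card T \<le> card S"
      "interleaved (2*\<epsilon>) (hom_module k dX S :: ('a list, 'f) dmod) (hom_module k dY T)"
      using tripod_interleave[OF dX dY e tri t2 S(2)] by blast
    have W: "(hom_module k dY T :: ('b list, 'f) dmod) \<in> dgm_set k n Y dY"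
      using T S by (auto simp: dgm_set_def)
    have "interleaving_dist V (hom_module k dY T :: ('b list, 'f) dmod) \<le> ereal (2*\<epsilon>)"
      using il_le[OF _ T(3)] e S(1) by simp
    then show "(INF W\<in>(dgm_set k n Y dY :: ('b list, 'f) dmod set). interleaving_dist V W) \<le> ereal (2*\<epsilon>)"
      using W by (meson INF_lower order_trans)
  qed
  show "(SUP W\<in>(dgm_set k n Y dY :: ('b list, 'f) dmod set). INF V\<in>(dgm_set k n X dX :: ('a list, 'f) dmod set). interleaving_dist V W) \<le> ereal (2*\<epsilon>)"
  proof (rule SUP_least)
    fix W assume "W \<in> (dgm_set k n Y dY :: ('b list, 'f) dmod set)"
    then obtain T where T: "W = hom_module k dY T" "T \<subseteq> Y" "card T \<le> n" by (auto simp: dgm_set_def)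
    obtain S where S: "S \<subseteq> X" "card S \<le> card T"
      "interleaved (2*\<epsilon>) (hom_module k dY T :: ('b list, 'f) dmod) (hom_module k dX S)"
      using tripod_interleave[OF dY dX e tripod_sym[OF tri] tripod_2eps_sym[OF t2] T(2)] by blast
    have V: "(hom_module k dX S :: ('a list, 'f) dmod) \<in> dgm_set k n X dX"
      using T S by (auto simp: dgm_set_def)
    have "interleaving_dist (hom_module k dX S :: ('a list, 'f) dmod) W \<le> ereal (2*\<epsilon>)"
      using il_le[OF _ interleaved_sym[OF S(3)]] e T(1) by simp
    then show "(INF V\<in>(dgm_set k n X dX :: ('a list, 'f) dmod set). interleaving_dist V W) \<le> ereal (2*\<epsilon>)"
      using V by (meson INF_lower order_trans)
  qed
qed

lemma le_2Inf:
  fixes H :: ereal and E :: "ereal set"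
  assumes E: "\<And>x. x \<in> E \<Longrightarrow> \<exists>\<epsilon>. x = ereal \<epsilon> \<and> 0 < \<epsilon> \<and> H \<le> ereal (2*\<epsilon>)"
  shows "H \<le> 2 * Inf E"
proof (cases "E = {}")
  case True then show ?thesis by (simp add: top_ereal_def)
next
  case False
  then obtain x0 where x0: "x0 \<in> E" by blast
  then obtain \<epsilon>0 where e0: "x0 = ereal \<epsilon>0" "0 < \<epsilon>0" using E by blast
  have lo: "0 \<le> Inf E" by (rule Inf_greatest) (use E in force)
  have up: "Inf E \<le> ereal \<epsilon>0" using x0 e0 by (metis Inf_lower)
  obtain m where m: "Inf E = ereal m" using lo up by (cases "Inf E") auto
  show ?thesis
  proof (rule dense_ge)
    fix x assume x: "2 * Inf E < x"
    show "H \<le> x"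
    proof (cases x)
      case (real r)
      then have "m < r/2" using x m by simp
      then have "Inf E < ereal (r/2)" using m by simp
      then obtain y where y: "y \<in> E" "y < ereal (r/2)" by (auto simp: Inf_less_iff)
      then obtain \<epsilon> where "y = ereal \<epsilon>" "H \<le> ereal (2*\<epsilon>)" using E by blast
      then show ?thesis using y real by (simp add: order_trans)
    next
      case PInf then show ?thesis by simp
    next
      case MInf then show ?thesis using x by simp
    qed
  qed
qed

theorem mainTheorem6:
  fixes X :: "'a::linorder set" and dX :: "real \<Rightarrow> 'a \<Rightarrow> 'a \<Rightarrow> real"
    and Y :: "'b::linorder set" and dY :: "real \<Rightarrow> 'b \<Rightarrow> 'b \<Rightarrow> real"
    and n k :: nat
  assumes "dms X dX" and "dms Y dY"
  shows "hausdorff erosion_dist (dgm_set k n X dX :: ('a list, 'f::field) dmod set) (dgm_set k n Y dY :: ('b list, 'f) dmod set)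
           \<le> hausdorff interleaving_dist (dgm_set k n X dX :: ('a list, 'f) dmod set) (dgm_set k n Y dY :: ('b list, 'f) dmod set)
         \<and> hausdorff interleaving_dist (dgm_set k n X dX :: ('a list, 'f) dmod set) (dgm_set k n Y dY :: ('b list, 'f) dmod set)
           \<le> 2 * d_dyn X dX Y dY"
proof
  show "hausdorff erosion_dist (dgm_set k n X dX :: ('a list, 'f::field) dmod set) (dgm_set k n Y dY :: ('b list, 'f) dmod set)
           \<le> hausdorff interleaving_dist (dgm_set k n X dX :: ('a list, 'f) dmod set) (dgm_set k n Y dY :: ('b list, 'f) dmod set)"
    by (rule hausdorff_mono, rule erosion_le_il) (use dgm_modok assms in blast)+
  show "hausdorff interleaving_dist (dgm_set k n X dX :: ('a list, 'f) dmod set) (dgm_set k n Y dY :: ('b list, 'f) dmod set)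
           \<le> 2 * d_dyn X dX Y dY"
    unfolding d_dyn_def
  proof (rule le_2Inf)
    fix x assume "x \<in> {ereal \<epsilon> | \<epsilon>. 0 < \<epsilon> \<and>
     (\<exists>(Z::('a \<times> 'b) set) \<phi>X \<phi>Y. tripod Z \<phi>X \<phi>Y X Y \<and> tripod_2eps \<epsilon> dX dY Z \<phi>X \<phi>Y)}"
    then obtain \<epsilon> and Z :: "('a \<times> 'b) set" and \<phi>X \<phi>Y where
      x: "x = ereal \<epsilon>" "0 < \<epsilon>" "tripod Z \<phi>X \<phi>Y X Y" "tripod_2eps \<epsilon> dX dY Z \<phi>X \<phi>Y" by blast
    have "hausdorff interleaving_dist (dgm_set k n X dX :: ('a list, 'f) dmod set) (dgm_set k n Y dY :: ('b list, 'f) dmod set)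
           \<le> ereal (2*\<epsilon>)" by (rule hausdorff_tripod[OF assms x(2-4)])
    then show "\<exists>\<epsilon>. x = ereal \<epsilon> \<and> 0 < \<epsilon> \<and> hausdorff interleaving_dist (dgm_set k n X dX :: ('a list, 'f) dmod set) (dgm_set k n Y dY :: ('b list, 'f) dmod set) \<le> ereal (2*\<epsilon>)"
      using x by blast
  qed
qed

end
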